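(* Let $m>2$ be an integer with prime factorization $m=p_1^{\alpha_1}\cdots p_r^{\alpha_r}$ ($p_1,\ldots,p_r$ distinct primes, $\alpha_i\ge1$), and let $p$ be an odd prime not dividing $m$. Then $$(-1)^{\frac{\varphi(m)}2\cdot\frac{p-1}2}\Big(\frac{p_1}p\Big)^{[r=1]}\prod_{\substack{0<k<m/2\\ \gcd(k,m)=1}}\binom{p-1}{\lfloor pk/m\rfloor}\equiv 1+\frac{\varphi(m)}2\sum_{i=1}^r(\alpha_ip_i-\alpha_i+1)\frac{p_i^{p-1}-1}{p_i-1}\pmod{p^2}.$$
   Context: $\varphi$ is Euler's totient function, $(\frac{\cdot}{p})$ is the Legendre symbol, $\lfloor x\rfloor$ is the integer part of $x$, and for an assertion $P$, $[P]=1$ if $P$ holds and $[P]=0$ otherwise. Congruences modulo $p^2$ are between rational numbers whose denominators are prime to $p$. *)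

theory Defs
  imports "HOL-Number_Theory.Number_Theory"
begin

end

theory Submission
  imports Defs
begin

locale oddp =
  fixes p :: nat
  assumes p_prime: "prime p" and p_odd: "odd p"
begin

lemma p_gt2: "p > 2"
  using p_prime p_odd prime_ge_2_nat[of p] by (cases "p = 2") auto

definition u :: "nat \<Rightarrow> int" where "u i = int i ^ (p - 2)"

definition H :: "nat \<Rightarrow> int" where "H j = (\<Sum>i\<in>{1..j}. u i)"

lemma fermat_int: assumes "\<not> p dvd i" shows "[int i ^ (p - 1) = 1] (mod int p)"
proof -
  have "[i ^ (p - 1) = 1] (mod p)" using fermat_theorem[OF p_prime assms] .
  then show ?thesis using cong_int_iff by force
qed

lemma u_inv: assumes "\<not> p dvd i" shows "[int i * u i = 1] (mod int p)"
proof -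
  have "p - 1 = Suc (p - 2)" using p_gt2 by simp
  then have "int i * u i = int i ^ (p - 1)" unfolding u_def by simp
  then show ?thesis using fermat_int[OF assms] by simp
qed

lemma cong_pmult: assumes "[a = b] (mod int p)" shows "[int p * a = int p * b] (mod (int p ^ 2))"
proof -
  obtain k where "a - b = int p * k" using assms unfolding cong_iff_dvd_diff by blast
  then have "int p * a - int p * b = int p ^ 2 * k" by (simp add: algebra_simps power2_eq_square)
  then show ?thesis unfolding cong_iff_dvd_diff by simp
qed

lemma prod_one_plus:
  assumes "finite A"
  shows "[(\<Prod>x\<in>A. 1 + int p * f x) = 1 + int p * (\<Sum>x\<in>A. f x)] (mod (int p ^ 2))"
  using assms
proof (induction A rule: finite_induct)
  case empty then show ?case by simp
next
  case (insert a A)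
  have "(\<Prod>x\<in>insert a A. 1 + int p * f x) = (1 + int p * f a) * (\<Prod>x\<in>A. 1 + int p * f x)"
    using insert by simp
  also have "[\<dots> = (1 + int p * f a) * (1 + int p * (\<Sum>x\<in>A. f x))] (mod (int p ^ 2))"
    using insert cong_mult cong_refl by blast
  also have "(1 + int p * f a) * (1 + int p * (\<Sum>x\<in>A. f x)) = 
     (1 + int p * (f a + (\<Sum>x\<in>A. f x))) + int p ^ 2 * (f a * (\<Sum>x\<in>A. f x))"
    by (simp add: algebra_simps power2_eq_square)
  also have "[\<dots> = 1 + int p * (f a + (\<Sum>x\<in>A. f x))] (mod (int p ^ 2))"
    by (simp add: cong_iff_dvd_diff)
  finally show ?case using insert by simp
qed

lemma binom_cong:
  assumes "j \<le> p - 1"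
  shows "[int ((p - 1) choose j) = (-1) ^ j * (1 - int p * H j)] (mod (int p ^ 2))"
  using assms
proof (induction j)
  case 0 then show ?case by (simp add: H_def)
next
  case (Suc j)
  have jl: "j < p - 1" using Suc by simp
  have IH: "[int ((p - 1) choose j) = (-1) ^ j * (1 - int p * H j)] (mod (int p ^ 2))"
    using Suc jl by simp
  have rec: "int ((p - 1) choose Suc j) * int (Suc j) = int ((p - 1) choose j) * (int p - 1 - int j)"
  proof -
    have e1: "Suc j * ((p-1) choose Suc j) = (p-1) * ((p-1-1) choose j)" by (rule binomial_absorption)
    have e2: "(p-1-j) * ((p-1) choose j) = (p-1) * ((p-1-1) choose j)" by (rule binomial_absorb_comp)
    have "((p - 1) choose Suc j) * Suc j = ((p - 1) choose j) * (p - 1 - j)"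
      using e1 e2 by (simp add: mult.commute)
    moreover have "int (p - 1 - j) = int p - 1 - int j" using jl by simp
    ultimately show ?thesis by (metis of_nat_mult)
  qed
  have nd: "\<not> p dvd Suc j" proof
    assume "p dvd Suc j" then have "p \<le> Suc j" by (simp add: dvd_imp_le)
    then show False using jl by simp
  qed
  have ui: "[int (Suc j) * u (Suc j) = 1] (mod int p)" using u_inv[OF nd] .
  have "[int ((p - 1) choose Suc j) * int (Suc j) = (-1) ^ j * (1 - int p * H j) * (int p - 1 - int j)] (mod (int p ^ 2))"
    unfolding rec using IH cong_mult cong_refl by blast
  moreover have "[(-1) ^ j * (1 - int p * H j) * (int p - 1 - int j) = (-1) ^ Suc j * (1 - int p * H (Suc j)) * int (Suc j)] (mod (int p ^ 2))"
  proof -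
    have HS: "H (Suc j) = H j + u (Suc j)" unfolding H_def by simp
    have "(-1) ^ j * (1 - int p * H j) * (int p - 1 - int j) - (-1) ^ Suc j * (1 - int p * H (Suc j)) * int (Suc j)
       = (-1) ^ j * (int p * (1 - int (Suc j) * u (Suc j)) - int p ^ 2 * H j)"
      unfolding HS by (simp add: algebra_simps power2_eq_square)
    moreover have "int p ^ 2 dvd int p * (1 - int (Suc j) * u (Suc j)) - int p ^ 2 * H j"
    proof -
      have "int p dvd 1 - int (Suc j) * u (Suc j)" using ui by (metis cong_iff_dvd_diff cong_sym)
      then have "int p ^ 2 dvd int p * (1 - int (Suc j) * u (Suc j))"
        by (simp add: power2_eq_square)
      then show ?thesis by (simp add: dvd_diff)
    qed
    ultimately show ?thesis unfolding cong_iff_dvd_diff by (simp add: dvd_mult)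
  qed
  ultimately have "[int ((p - 1) choose Suc j) * int (Suc j) = (-1) ^ Suc j * (1 - int p * H (Suc j)) * int (Suc j)] (mod (int p ^ 2))"
    using cong_trans by blast
  moreover have "coprime (int (Suc j)) (int p ^ 2)"
  proof -
    have "coprime p (Suc j)" using nd p_prime prime_imp_coprime by blast
    then have "coprime (Suc j) (p ^ 2)" by (simp add: coprime_commute)
    then show ?thesis by (metis coprime_int_iff of_nat_power)
  qed
  ultimately show ?case using cong_mult_rcancel by blast
qed

end

lemma sum_Pow_insert:
  assumes "finite A" "a \<notin> A"
  shows "(\<Sum>D\<in>Pow (insert a A). f D) = (\<Sum>D\<in>Pow A. f D + f (insert a D))"
proof -
  have "(\<Sum>D\<in>Pow (insert a A). f D) = (\<Sum>D\<in>Pow A. f D) + (\<Sum>D\<in>insert a ` Pow A. f D)"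
    unfolding Pow_insert by (rule sum.union_disjoint) (use assms in auto)
  also have "(\<Sum>D\<in>insert a ` Pow A. f D) = (\<Sum>D\<in>Pow A. f (insert a D))"
    by (subst sum.reindex) (use assms in \<open>auto intro!: inj_onI simp: o_def\<close>)
  finally show ?thesis by (simp add: sum.distrib)
qed

lemma prod_Pow_insert:
  assumes "finite A" "a \<notin> A"
  shows "(\<Prod>D\<in>Pow (insert a A). f D) = (\<Prod>D\<in>Pow A. f D * f (insert a D))"
proof -
  have "(\<Prod>D\<in>Pow (insert a A). f D) = (\<Prod>D\<in>Pow A. f D) * (\<Prod>D\<in>insert a ` Pow A. f D)"
    unfolding Pow_insert by (rule prod.union_disjoint) (use assms in auto)
  also have "(\<Prod>D\<in>insert a ` Pow A. f D) = (\<Prod>D\<in>Pow A. f (insert a D))"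
    by (subst prod.reindex) (use assms in \<open>auto intro!: inj_onI simp: o_def\<close>)
  finally show ?thesis by (simp add: prod.distrib)
qed

lemma card_insert_Pow:
  assumes "finite A" "a \<notin> A" "D \<in> Pow A"
  shows "card (insert a D) = Suc (card D)"
proof -
  have "D \<subseteq> A" using assms(3) by simp
  then have "finite D" "a \<notin> D" using assms(1,2) finite_subset by auto
  then show ?thesis by simp
qed

lemma sum_Pow_sign:
  assumes "finite A" "A \<noteq> {}"
  shows "(\<Sum>D\<in>Pow A. (-1::'a::comm_ring_1) ^ card D) = 0"
proof -
  obtain a where a: "a \<in> A" using assms by blast
  define B where "B = A - {a}"
  have AB: "A = insert a B" "a \<notin> B" using a unfolding B_def by auto
  have fB: "finite B" using AB assms by auto
  have "(\<Sum>D\<in>Pow (insert a B). (-1::'a) ^ card D) = (\<Sum>D\<in>Pow B. (-1) ^ card D + (-1) ^ card (insert a D))"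
    by (rule sum_Pow_insert[OF fB AB(2)])
  also have "\<dots> = 0"
  proof (rule sum.neutral, rule ballI)
    fix D assume D: "D \<in> Pow B"
    show "(-1::'a) ^ card D + (-1) ^ card (insert a D) = 0"
      using card_insert_Pow[OF fB AB(2) D] by simp
  qed
  finally show ?thesis using AB by simp
qed

definition SS :: "nat \<Rightarrow> nat set \<Rightarrow> nat \<Rightarrow> nat set" where
  "SS c P n = {k. 0 < k \<and> c * k < n \<and> (\<forall>q\<in>P. \<not> q dvd k)}"

lemma SS_finite: assumes "c > 0" shows "finite (SS c P n)"
proof (rule finite_subset[of _ "{..<n}"])
  show "SS c P n \<subseteq> {..<n}"
  proof
    fix k assume "k \<in> SS c P n"
    then have "c * k < n" by (simp add: SS_def)
    moreover have "1 * k \<le> c * k" using assms by (intro mult_le_mono1) simp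
    ultimately have "k < n" by linarith
    then show "k \<in> {..<n}" by simp
  qed
qed simp

lemma SS_insert:
  assumes "q \<notin> P" "prime q" "q dvd n" "\<forall>q'\<in>P. prime q'"
  shows "SS c (insert q P) n = SS c P n - (\<lambda>k. q * k) ` SS c P (n div q)"
    and "(\<lambda>k. q * k) ` SS c P (n div q) \<subseteq> SS c P n"
proof -
  obtain n' where n: "n = q * n'" using assms(3) by blast
  have q0: "q > 0" using assms(2) prime_gt_0_nat by blast
  have nd: "n div q = n'" using n q0 by simp
  have key: "\<And>k. (\<forall>q'\<in>P. \<not> q' dvd q * k) \<longleftrightarrow> (\<forall>q'\<in>P. \<not> q' dvd k)"
  proof -
    fix k
    have "\<And>q'. q' \<in> P \<Longrightarrow> q' dvd q * k \<longleftrightarrow> q' dvd k"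
    proof -
      fix q' assume "q' \<in> P"
      then have pq: "prime q'" "q' \<noteq> q" using assms by auto
      then have "\<not> q' dvd q" using assms(2) primes_dvd_imp_eq by blast
      then show "q' dvd q * k \<longleftrightarrow> q' dvd k" using pq prime_dvd_mult_iff by blast
    qed
    then show "?thesis k" by blast
  qed
  show "(\<lambda>k. q * k) ` SS c P (n div q) \<subseteq> SS c P n"
    unfolding nd using key q0 by (auto simp: SS_def n)
  show "SS c (insert q P) n = SS c P n - (\<lambda>k. q * k) ` SS c P (n div q)"
  proof (rule equalityI; rule subsetI)
    fix k assume "k \<in> SS c (insert q P) n"
    then show "k \<in> SS c P n - (\<lambda>k. q * k) ` SS c P (n div q)"
      by (auto simp: SS_def)
  next
    fix k assume k: "k \<in> SS c P n - (\<lambda>k. q * k) ` SS c P (n div q)"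
    have "\<not> q dvd k"
    proof
      assume "q dvd k"
      then obtain k' where kk: "k = q * k'" by blast
      have "k' \<in> SS c P (n div q)" using k key q0 unfolding nd kk by (auto simp: SS_def n)
      then show False using k kk by blast
    qed
    then show "k \<in> SS c (insert q P) n" using k by (auto simp: SS_def)
  qed
qed

lemma IE:
  fixes F :: "nat \<Rightarrow> nat \<Rightarrow> 'a::comm_ring_1"
  assumes c: "c > 0" and "finite P" and "\<forall>q\<in>P. prime q" and "\<forall>q\<in>P. q dvd n"
    and inv: "\<And>q k n. q > 0 \<Longrightarrow> F (q * k) (q * n) = F k n"
  shows "(\<Sum>k\<in>SS c P n. F k n) = (\<Sum>D\<in>Pow P. (-1) ^ card D * (\<Sum>k\<in>SS c {} (n div \<Prod>D). F k (n div \<Prod>D)))"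
  using assms(2-4)
proof (induction P arbitrary: n rule: finite_induct)
  case empty then show ?case by simp
next
  case (insert q P)
  have pq: "prime q" "q dvd n" "\<forall>q'\<in>P. prime q'" using insert by auto
  have q0: "q > 0" using pq prime_gt_0_nat by blast
  have dv: "\<forall>q'\<in>P. q' dvd n div q"
  proof
    fix q' assume q': "q' \<in> P"
    then have "prime q'" "q' \<noteq> q" "q' dvd n" using insert by auto
    moreover have "n = q * (n div q)" using pq by simp
    ultimately show "q' dvd n div q"
      by (metis pq(1) prime_dvd_mult_iff primes_dvd_imp_eq)
  qed
  have IH1: "(\<Sum>k\<in>SS c P n. F k n) = (\<Sum>D\<in>Pow P. (-1) ^ card D * (\<Sum>k\<in>SS c {} (n div \<Prod>D). F k (n div \<Prod>D)))"
    using insert pq by blast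
  have IH2: "(\<Sum>k\<in>SS c P (n div q). F k (n div q)) = (\<Sum>D\<in>Pow P. (-1) ^ card D * (\<Sum>k\<in>SS c {} (n div q div \<Prod>D). F k (n div q div \<Prod>D)))"
    using insert pq dv by blast
  have "(\<Sum>k\<in>SS c (insert q P) n. F k n) = (\<Sum>k\<in>SS c P n. F k n) - (\<Sum>k\<in>(\<lambda>k. q * k) ` SS c P (n div q). F k n)"
    unfolding SS_insert(1)[OF insert(2) pq] using SS_insert(2)[OF insert(2) pq] SS_finite[OF c]
    by (simp add: sum_diff)
  also have "(\<Sum>k\<in>(\<lambda>k. q * k) ` SS c P (n div q). F k n) = (\<Sum>k\<in>SS c P (n div q). F (q * k) n)"
    by (subst sum.reindex) (use q0 in \<open>auto simp: inj_on_def\<close>)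
  also have "\<dots> = (\<Sum>k\<in>SS c P (n div q). F k (n div q))"
  proof (rule sum.cong)
    fix k show "F (q * k) n = F k (n div q)" using inv[OF q0, of k "n div q"] pq by simp
  qed simp
  finally have L: "(\<Sum>k\<in>SS c (insert q P) n. F k n) = (\<Sum>k\<in>SS c P n. F k n) - (\<Sum>k\<in>SS c P (n div q). F k (n div q))" .
  have "(\<Sum>D\<in>Pow (insert q P). (-1) ^ card D * (\<Sum>k\<in>SS c {} (n div \<Prod>D). F k (n div \<Prod>D)))
     = (\<Sum>D\<in>Pow P. (-1) ^ card D * (\<Sum>k\<in>SS c {} (n div \<Prod>D). F k (n div \<Prod>D))
          + (-1) ^ card (insert q D) * (\<Sum>k\<in>SS c {} (n div \<Prod>(insert q D)). F k (n div \<Prod>(insert q D))))"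
    by (rule sum_Pow_insert[OF insert(1,2)])
  also have "\<dots> = (\<Sum>D\<in>Pow P. (-1) ^ card D * (\<Sum>k\<in>SS c {} (n div \<Prod>D). F k (n div \<Prod>D))
          - (-1) ^ card D * (\<Sum>k\<in>SS c {} (n div q div \<Prod>D). F k (n div q div \<Prod>D)))"
  proof (rule sum.cong)
    fix D assume D: "D \<in> Pow P"
    have "card (insert q D) = Suc (card D)" using card_insert_Pow[OF insert(1,2) D] .
    moreover have "\<Prod>(insert q D) = q * \<Prod>D" using D insert(1,2)
      by (meson PowD finite_subset prod.insert subsetD)
    moreover have "n div (q * \<Prod>D) = n div q div \<Prod>D" by (simp add: div_mult2_eq)
    ultimately show "(-1) ^ card D * (\<Sum>k\<in>SS c {} (n div \<Prod>D). F k (n div \<Prod>D))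
          + (-1) ^ card (insert q D) * (\<Sum>k\<in>SS c {} (n div \<Prod>(insert q D)). F k (n div \<Prod>(insert q D)))
        = (-1) ^ card D * (\<Sum>k\<in>SS c {} (n div \<Prod>D). F k (n div \<Prod>D))
          - (-1) ^ card D * (\<Sum>k\<in>SS c {} (n div q div \<Prod>D). F k (n div q div \<Prod>D))"
      by simp
  qed simp
  also have "\<dots> = (\<Sum>k\<in>SS c P n. F k n) - (\<Sum>k\<in>SS c P (n div q). F k (n div q))"
    unfolding IH1 IH2 by (simp add: sum_subtractf)
  finally show ?case using L by simp
qed

lemma sum_swap_floor:
  fixes g :: "nat \<Rightarrow> 'a::comm_ring_1"
  assumes "finite A" "\<forall>k\<in>A. f k \<le> N"
  shows "(\<Sum>k\<in>A. \<Sum>i\<in>{1..f k}. g i) = (\<Sum>i\<in>{1..N}. g i * of_nat (card {k\<in>A. i \<le> f k}))"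
proof -
  have "(\<Sum>k\<in>A. \<Sum>i\<in>{1..f k}. g i) = (\<Sum>k\<in>A. \<Sum>i\<in>{1..N}. if i \<le> f k then g i else 0)"
  proof (rule sum.cong)
    fix k assume k: "k \<in> A"
    have "(\<Sum>i\<in>{1..N}. if i \<le> f k then g i else 0) = (\<Sum>i\<in>{i\<in>{1..N}. i \<le> f k}. g i)"
      by (rule sum.inter_filter[symmetric]) simp
    also have "{i\<in>{1..N}. i \<le> f k} = {1..f k}" using assms(2) k by auto
    finally show "(\<Sum>i\<in>{1..f k}. g i) = (\<Sum>i\<in>{1..N}. if i \<le> f k then g i else 0)" by simp
  qed simp
  also have "\<dots> = (\<Sum>i\<in>{1..N}. \<Sum>k\<in>A. if i \<le> f k then g i else 0)"
    by (rule sum.swap)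
  also have "\<dots> = (\<Sum>i\<in>{1..N}. g i * of_nat (card {k\<in>A. i \<le> f k}))"
  proof (rule sum.cong)
    fix i
    have "(\<Sum>k\<in>A. if i \<le> f k then g i else 0) = (\<Sum>k\<in>{k\<in>A. i \<le> f k}. g i)"
      by (rule sum.inter_filter[symmetric]) (use assms(1) in simp)
    then show "(\<Sum>k\<in>A. if i \<le> f k then g i else 0) = g i * of_nat (card {k\<in>A. i \<le> f k})"
      by (simp add: mult.commute)
  qed simp
  finally show ?thesis .
qed

context oddp
begin

lemma ndvd_less_iff: assumes "\<not> p dvd x" shows "p * k < x \<longleftrightarrow> k \<le> x div p"
proof
  assume "p * k < x" then have "k * p \<le> x" by (simp add: mult.commute)
  then show "k \<le> x div p" using less_eq_div_iff_mult_less_eq[of p k x] p_gt2 by simp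
next
  assume "k \<le> x div p"
  then have "p * k \<le> p * (x div p)" by simp
  also have "\<dots> \<le> x" by simp
  finally have "p * k \<le> x" .
  moreover have "p * k \<noteq> x" using assms by auto
  ultimately show "p * k < x" by simp
qed

lemma count_lemma:
  assumes c: "c > 0" and n: "n > 0" "\<not> p dvd n" and i: "\<not> p dvd i" and small: "c * (i * n div p) < n"
  shows "card {k\<in>SS c {} n. i \<le> p * k div n} + i * n div p = card (SS c {} n)"
proof -
  have pin: "\<not> p dvd i * n" using p_prime n i prime_dvd_mult_iff by blast
  have eq: "{k\<in>SS c {} n. \<not> i \<le> p * k div n} = {1..i * n div p}"
  proof (rule Set.set_eqI)
    fix k
    have a: "\<not> i \<le> p * k div n \<longleftrightarrow> p * k < i * n"
      using less_eq_div_iff_mult_less_eq[of n i "p * k"] n by (simp add: not_le mult.commute)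
    have b: "p * k < i * n \<longleftrightarrow> k \<le> i * n div p" using ndvd_less_iff[OF pin] .
    have "k \<le> i * n div p \<Longrightarrow> c * k < n" using small c
      by (meson le_less_trans mult_le_mono2)
    then show "k \<in> {k\<in>SS c {} n. \<not> i \<le> p * k div n} \<longleftrightarrow> k \<in> {1..i * n div p}"
      using a b by (auto simp: SS_def)
  qed
  have fin: "finite (SS c {} n)" using SS_finite[OF c] .
  have un: "SS c {} n = {k\<in>SS c {} n. i \<le> p * k div n} \<union> {k\<in>SS c {} n. \<not> i \<le> p * k div n}" by auto
  have "card (SS c {} n) = card {k\<in>SS c {} n. i \<le> p * k div n} + card {k\<in>SS c {} n. \<not> i \<le> p * k div n}"
    by (subst un, rule card_Un_disjoint) (use fin in auto)
  then show ?thesis unfolding eq by simp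
qed


lemma base_sign:
  assumes n: "n > 0" "\<not> p dvd n"
  shows "int (\<Sum>k\<in>SS 2 {} n. p * k div n) = int ((p - 1) div 2) * int (card (SS 2 {} n))
           - (\<Sum>i\<in>{1..(p - 1) div 2}. int (i * n div p))"
proof -
  define h where "h = (p - 1) div 2"
  have p2h: "p = 2 * h + 1" unfolding h_def using p_odd by simp
  have fin: "finite (SS 2 {} n)" by (rule SS_finite) simp
  have bound: "\<forall>k\<in>SS 2 {} n. p * k div n \<le> h"
  proof
    fix k assume "k \<in> SS 2 {} n"
    then have "2 * k < n" by (simp add: SS_def)
    then have "2 * k + 1 \<le> n" by simp
    then have "p * (2 * k + 1) \<le> p * n" by (rule mult_le_mono2)
    then have "2 * (p * k) < 2 * ((h + 1) * n)" unfolding p2h by (simp add: algebra_simps)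
    then have "p * k < (h + 1) * n" by simp
    then have "p * k div n < h + 1" using div_less_iff_less_mult[of n "p * k" "h + 1"] n by simp
    then show "p * k div n \<le> h" by simp
  qed
  have "int (\<Sum>k\<in>SS 2 {} n. p * k div n) = (\<Sum>k\<in>SS 2 {} n. \<Sum>i\<in>{1..p * k div n}. (1::int))"
    by simp
  also have "\<dots> = (\<Sum>i\<in>{1..h}. 1 * int (card {k\<in>SS 2 {} n. i \<le> p * k div n}))"
    by (rule sum_swap_floor[OF fin bound])
  also have "\<dots> = (\<Sum>i\<in>{1..h}. int (card (SS 2 {} n)) - int (i * n div p))"
  proof (rule sum.cong)
    fix i assume i: "i \<in> {1..h}"
    have ndi: "\<not> p dvd i"
    proof
      assume "p dvd i" then have "p \<le> i" using i by (simp add: dvd_imp_le)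
      then show False using i p2h by simp
    qed
    have "i * n div p * p \<le> i * n" by simp
    then have "2 * (i * n div p) * p \<le> 2 * i * n" by simp
    also have "\<dots> \<le> 2 * h * n" using i by simp
    also have "\<dots> < p * n" unfolding p2h using n by simp
    finally have "2 * (i * n div p) * p < n * p" by (simp add: mult.commute)
    then have small: "2 * (i * n div p) < n" by simp
    have "card {k\<in>SS 2 {} n. i \<le> p * k div n} + i * n div p = card (SS 2 {} n)"
      by (rule count_lemma[OF _ n ndi small]) simp
    then show "1 * int (card {k\<in>SS 2 {} n. i \<le> p * k div n}) = int (card (SS 2 {} n)) - int (i * n div p)"
      by linarith
  qed simp
  also have "\<dots> = int h * int (card (SS 2 {} n)) - (\<Sum>i\<in>{1..h}. int (i * n div p))"
    by (simp add: sum_subtractf)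
  finally show ?thesis unfolding h_def .
qed

lemma u_neg: assumes "i \<le> p" shows "[u (p - i) = - u i] (mod int p)"
proof -
  have "[int (p - i) = - int i] (mod int p)" using assms
    by (simp add: cong_iff_dvd_diff of_nat_diff)
  then have "[int (p - i) ^ (p - 2) = (- int i) ^ (p - 2)] (mod int p)" by (rule cong_pow)
  moreover have "odd (p - 2)" using p_odd p_gt2 by simp
  ultimately show ?thesis unfolding u_def by (simp add: power_minus_odd)
qed

lemma H_p1: "[H (p - 1) = 0] (mod int p)"
proof -
  have "H (p - 1) = (\<Sum>i\<in>{1..p - 1}. u (p - i))"
    unfolding H_def
    by (rule sum.reindex_bij_witness[of _ "\<lambda>i. p - i" "\<lambda>i. p - i"]) auto
  moreover have "[(\<Sum>i\<in>{1..p - 1}. u (p - i)) = (\<Sum>i\<in>{1..p - 1}. - u i)] (mod int p)"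
    by (rule cong_sum) (use u_neg in auto)
  ultimately have "[H (p - 1) = - H (p - 1)] (mod int p)" unfolding H_def by (simp add: sum_negf)
  then have "int p dvd 2 * H (p - 1)" by (simp add: cong_iff_dvd_diff)
  moreover have "\<not> int p dvd 2"
  proof
    assume "int p dvd 2" then have "int p dvd int 2" by simp
    then have "p dvd 2" by (simp only: of_nat_dvd_iff)
    then show False using p_gt2 dvd_imp_le[of p 2] by simp
  qed
  moreover have pi: "prime (int p)" using p_prime by simp
  ultimately have "int p dvd H (p - 1)"
    using prime_dvd_mult_iff[OF pi, of 2 "H (p - 1)"] by blast
  then show ?thesis by (simp add: cong_0_iff)
qed

lemma H_sym: "j \<le> p - 1 \<Longrightarrow> [H (p - 1 - j) = H j] (mod int p)"
proof (induction j)
  case 0 then show ?case using H_p1 by (simp add: H_def)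
next
  case (Suc j)
  have j: "j < p - 1" using Suc by simp
  have Hrec: "H (p - 1 - j) = H (p - 1 - Suc j) + u (p - 1 - j)"
  proof -
    have "p - 1 - j = Suc (p - 1 - Suc j)" using j by simp
    then show ?thesis unfolding H_def by simp
  qed
  moreover have "[u (p - 1 - j) = - u (Suc j)] (mod int p)"
    using u_neg[of "Suc j"] j by simp
  moreover have "[H (p - 1 - j) = H j] (mod int p)" using Suc j by simp
  ultimately have d1: "int p dvd H (p - 1 - j) - H j" and d2: "int p dvd u (p - 1 - j) + u (Suc j)"
    by (simp_all add: cong_iff_dvd_diff)
  have dX: "int p dvd (H (p - 1 - j) - H j) - (u (p - 1 - j) + u (Suc j))"
    using d1 d2 by (rule dvd_diff)
  have eqXY: "(H (p - 1 - j) - H j) - (u (p - 1 - j) + u (Suc j)) = H (p - 1 - Suc j) - (H j + u (Suc j))"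
    by (subst Hrec) (simp add: algebra_simps)
  from dX have "int p dvd H (p - 1 - Suc j) - (H j + u (Suc j))" unfolding eqXY .
  then have "[H (p - 1 - Suc j) = H j + u (Suc j)] (mod int p)"
    by (simp only: cong_iff_dvd_diff)
  then show ?case unfolding H_def by simp
qed

lemma base_H:
  assumes n: "n > 0" "\<not> p dvd n"
  shows "[(\<Sum>k\<in>SS 1 {} n. H (p * k div n)) = - (\<Sum>i\<in>{1..p - 1}. int (i * n div p) * u i)] (mod int p)"
proof -
  have fin: "finite (SS 1 {} n)" by (rule SS_finite) simp
  have bound: "\<forall>k\<in>SS 1 {} n. p * k div n \<le> p - 1"
  proof
    fix k assume "k \<in> SS 1 {} n"
    then have "k < n" by (simp add: SS_def)
    then have "p * k < p * n" using p_gt2 by simp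
    then have "p * k div n < p" using div_less_iff_less_mult[of n "p * k" p] n by (simp add: mult.commute)
    then show "p * k div n \<le> p - 1" by simp
  qed
  have "(\<Sum>k\<in>SS 1 {} n. H (p * k div n)) = (\<Sum>k\<in>SS 1 {} n. \<Sum>i\<in>{1..p * k div n}. u i)"
    unfolding H_def by simp
  also have "\<dots> = (\<Sum>i\<in>{1..p - 1}. u i * int (card {k\<in>SS 1 {} n. i \<le> p * k div n}))"
    by (rule sum_swap_floor[OF fin bound])
  also have "\<dots> = (\<Sum>i\<in>{1..p - 1}. int (card (SS 1 {} n)) * u i - int (i * n div p) * u i)"
  proof (rule sum.cong)
    fix i assume i: "i \<in> {1..p - 1}"
    have ndi: "\<not> p dvd i"
    proof
      assume "p dvd i" then have "p \<le> i" using i by (simp add: dvd_imp_le)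
      then show False using i p_gt2 by simp
    qed
    have "i * n div p * p \<le> i * n" by simp
    also have "\<dots> < p * n"
    proof -
      have "i < p" using i p_gt2 by auto
      then show ?thesis using n by simp
    qed
    finally have "(i * n div p) * p < n * p" by (simp add: mult.commute)
    then have small: "1 * (i * n div p) < n" by simp
    have "card {k\<in>SS 1 {} n. i \<le> p * k div n} + i * n div p = card (SS 1 {} n)"
      by (rule count_lemma[OF _ n ndi small]) simp
    then have e: "int (card {k\<in>SS 1 {} n. i \<le> p * k div n}) = int (card (SS 1 {} n)) - int (i * n div p)"
      by linarith
    show "u i * int (card {k\<in>SS 1 {} n. i \<le> p * k div n}) = int (card (SS 1 {} n)) * u i - int (i * n div p) * u i"
      unfolding e by (simp add: algebra_simps)
  qed simp
  also have "\<dots> = int (card (SS 1 {} n)) * H (p - 1) - (\<Sum>i\<in>{1..p - 1}. int (i * n div p) * u i)"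
    unfolding H_def by (simp add: sum_subtractf sum_distrib_left)
  finally have eq: "(\<Sum>k\<in>SS 1 {} n. H (p * k div n)) = int (card (SS 1 {} n)) * H (p - 1) - (\<Sum>i\<in>{1..p - 1}. int (i * n div p) * u i)" .
  have "[int (card (SS 1 {} n)) * H (p - 1) = int (card (SS 1 {} n)) * 0] (mod int p)"
    by (rule cong_mult[OF cong_refl H_p1])
  then have "[int (card (SS 1 {} n)) * H (p - 1) - (\<Sum>i\<in>{1..p - 1}. int (i * n div p) * u i)
      = 0 - (\<Sum>i\<in>{1..p - 1}. int (i * n div p) * u i)] (mod int p)"
    by (intro cong_diff cong_refl) simp
  then show ?thesis unfolding eq by simp
qed

end

context oddp
begin

lemma coprime_p2: assumes "\<not> int p dvd a" shows "coprime a (int p ^ 2)"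
proof -
  have pi: "prime (int p)" using p_prime by simp
  have "coprime (int p) a" using prime_imp_coprime[OF pi assms] .
  then show ?thesis by (simp add: coprime_commute)
qed

lemma ndvd_int: "\<not> p dvd n \<Longrightarrow> \<not> int p dvd int n" by simp

lemma F_ident:
  assumes nd: "\<not> p dvd n"
  shows "[int p * (\<Sum>i\<in>{1..p - 1}. int (i * n div p) * u i) = int n * (int n ^ (p - 1) - 1)] (mod (int p ^ 2))"
proof -
  define I where "I = {1..p - 1}"
  define d where "d i = i * n div p" for i
  define r where "r i = i * n mod p" for i
  define f where "f = (\<Prod>i\<in>I. int i)"
  have finI: "finite I" unfolding I_def by simp
  have cardI: "card I = p - 1" unfolding I_def by simp
  have pi: "prime (int p)" using p_prime by simp
  have ndi: "\<And>i. i \<in> I \<Longrightarrow> \<not> p dvd i"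
  proof
    fix i assume i: "i \<in> I" "p dvd i"
    then have "p \<le> i" by (simp add: I_def dvd_imp_le)
    then show False using i p_gt2 by (simp add: I_def)
  qed
  have ndin: "\<And>i. i \<in> I \<Longrightarrow> \<not> p dvd i * n"
    using ndi nd p_prime prime_dvd_mult_iff by blast
  have ndr: "\<And>i. i \<in> I \<Longrightarrow> \<not> p dvd r i"
    using ndin unfolding r_def by (simp add: dvd_mod_iff)
  have P1: "(\<Prod>i\<in>I. int (i * n)) = int n ^ (p - 1) * f"
    unfolding f_def by (simp add: prod.distrib cardI mult.commute)
  have P2: "[(\<Prod>i\<in>I. int (i * n)) = (\<Prod>i\<in>I. int (r i) * (1 + int p * (int (d i) * u (r i))))] (mod (int p ^ 2))"
  proof (rule cong_prod)
    fix i assume i: "i \<in> I"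
    have e: "int (i * n) = int (r i) + int p * int (d i)"
    proof -
      have "i * n = p * d i + r i" unfolding d_def r_def by simp
      then have "int (i * n) = int (p * d i + r i)" by simp
      then show ?thesis by simp
    qed
    have "int p dvd int (r i) * u (r i) - 1"
      using u_inv[OF ndr[OF i]] by (simp add: cong_iff_dvd_diff)
    then have dZ: "int p ^ 2 dvd int p * int (d i) * (int (r i) * u (r i) - 1)"
      by (simp add: power2_eq_square mult_dvd_mono)
    have eqZ: "int (r i) * (1 + int p * (int (d i) * u (r i))) - int (i * n) = int p * int (d i) * (int (r i) * u (r i) - 1)"
      unfolding e by (simp add: algebra_simps)
    have "int p ^ 2 dvd int (r i) * (1 + int p * (int (d i) * u (r i))) - int (i * n)"
      unfolding eqZ by (rule dZ)
    then have "[int (r i) * (1 + int p * (int (d i) * u (r i))) = int (i * n)] (mod (int p ^ 2))"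
      by (simp only: cong_iff_dvd_diff)
    then show "[int (i * n) = int (r i) * (1 + int p * (int (d i) * u (r i)))] (mod (int p ^ 2))"
      by (rule cong_sym)
  qed
  have P5: "(\<Prod>i\<in>I. int (r i)) = f"
  proof -
    have inj: "inj_on r I"
    proof (rule inj_onI)
      fix i j assume ij: "i \<in> I" "j \<in> I" "r i = r j"
      then have "[i * n = j * n] (mod p)" unfolding r_def by (simp add: cong_def)
      moreover have "coprime n p" using nd p_prime prime_imp_coprime coprime_commute by blast
      ultimately have "[i = j] (mod p)" using cong_mult_rcancel_nat by blast
      moreover have "i < p" "j < p" using ij p_gt2 by (auto simp: I_def)
      ultimately show "i = j" by (simp add: cong_def)
    qed
    have sub: "r ` I \<subseteq> I"
    proof
      fix x assume "x \<in> r ` I"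
      then obtain i where i: "i \<in> I" "x = r i" by blast
      have "r i \<noteq> 0" using ndr[OF i(1)] by (intro notI) simp
      then have "x \<noteq> 0" by (simp add: i(2))
      moreover have "x < p" unfolding i r_def using p_gt2 by simp
      ultimately show "x \<in> I" by (simp add: I_def)
    qed
    have "r ` I = I" using endo_inj_surj[OF finI sub inj] .
    then have "(\<Prod>i\<in>I. int (r i)) = (\<Prod>i\<in>r ` I. int i)"
      using prod.reindex[OF inj, of int] by simp
    then show ?thesis unfolding f_def using \<open>r ` I = I\<close> by simp
  qed
  have P7: "[(\<Sum>i\<in>I. int (d i) * u (r i)) = u n * (\<Sum>i\<in>I. int (d i) * u i)] (mod int p)"
  proof -
    have "[(\<Sum>i\<in>I. int (d i) * u (r i)) = (\<Sum>i\<in>I. u n * (int (d i) * u i))] (mod int p)"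
    proof (rule cong_sum)
      fix i assume i: "i \<in> I"
      have "int (r i) = int (i * n) mod int p" by (simp add: r_def of_nat_mod)
      moreover have "[int (i * n) mod int p = int (i * n)] (mod int p)" by (simp add: cong_def)
      ultimately have "[int (r i) = int i * int n] (mod int p)" by simp
      then have "[int (r i) ^ (p - 2) = (int i * int n) ^ (p - 2)] (mod int p)" by (rule cong_pow)
      then have "[u (r i) = u i * u n] (mod int p)" unfolding u_def by (simp add: power_mult_distrib)
      then have "[int (d i) * u (r i) = int (d i) * (u i * u n)] (mod int p)"
        by (rule cong_scalar_left)
      moreover have "int (d i) * (u i * u n) = u n * (int (d i) * u i)" by (simp add: ac_simps)
      ultimately show "[int (d i) * u (r i) = u n * (int (d i) * u i)] (mod int p)" by simp
    qed
    then show ?thesis by (simp add: sum_distrib_left)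
  qed
  define X where "X = (\<Sum>i\<in>I. int (d i) * u (r i))"
  define Fs where "Fs = (\<Sum>i\<in>I. int (d i) * u i)"
  have "[int n ^ (p - 1) * f = f * (1 + int p * X)] (mod (int p ^ 2))"
  proof -
    have "(\<Prod>i\<in>I. int (r i) * (1 + int p * (int (d i) * u (r i)))) = f * (\<Prod>i\<in>I. 1 + int p * (int (d i) * u (r i)))"
      using P5 by (simp add: prod.distrib)
    moreover have "[(\<Prod>i\<in>I. 1 + int p * (int (d i) * u (r i))) = 1 + int p * X] (mod (int p ^ 2))"
      unfolding X_def by (rule prod_one_plus[OF finI])
    ultimately have c1: "[(\<Prod>i\<in>I. int (r i) * (1 + int p * (int (d i) * u (r i)))) = f * (1 + int p * X)] (mod (int p ^ 2))"
      using cong_scalar_left by simp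
    from P2 have c2: "[int n ^ (p - 1) * f = (\<Prod>i\<in>I. int (r i) * (1 + int p * (int (d i) * u (r i))))] (mod (int p ^ 2))"
      by (simp only: P1)
    show ?thesis using c2 c1 by (rule cong_trans)
  qed
  moreover have "[f * (1 + int p * X) = f * (1 + int p * (u n * Fs))] (mod (int p ^ 2))"
  proof -
    have "[int p * X = int p * (u n * Fs)] (mod (int p ^ 2))"
      using cong_pmult[OF P7] unfolding X_def Fs_def .
    from cong_add[OF cong_refl[of 1] this] show ?thesis by (rule cong_scalar_left)
  qed
  ultimately have "[int n ^ (p - 1) * f = f * (1 + int p * (u n * Fs))] (mod (int p ^ 2))"
    by (rule cong_trans)
  then have "[int n ^ (p - 1) * f = (1 + int p * (u n * Fs)) * f] (mod (int p ^ 2))"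
    by (simp only: mult.commute)
  moreover have "coprime f (int p ^ 2)"
  proof (rule coprime_p2)
    show "\<not> int p dvd f" unfolding f_def
      using prime_dvd_prod_iff[OF finI pi, of int] ndi by simp
  qed
  ultimately have A: "[int n ^ (p - 1) = 1 + int p * (u n * Fs)] (mod (int p ^ 2))"
    using cong_mult_rcancel by blast
  have "[int n * (int n ^ (p - 1) - 1) = int n * (int p * (u n * Fs))] (mod (int p ^ 2))"
  proof -
    have "[int n ^ (p - 1) - 1 = int p * (u n * Fs)] (mod (int p ^ 2))"
      using cong_diff[OF A cong_refl[of 1]] by simp
    then show ?thesis by (rule cong_scalar_left)
  qed
  moreover have "[int p * (int n * u n * Fs) = int p * Fs] (mod (int p ^ 2))"
  proof (rule cong_pmult)
    show "[int n * u n * Fs = Fs] (mod int p)"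
      using cong_mult[OF u_inv[OF nd] cong_refl[of Fs]] by simp
  qed
  moreover have "int n * (int p * (u n * Fs)) = int p * (int n * u n * Fs)" by (simp add: ac_simps)
  ultimately have "[int n * (int n ^ (p - 1) - 1) = int p * Fs] (mod (int p ^ 2))"
    using cong_trans by simp
  then show ?thesis unfolding Fs_def I_def d_def by (rule cong_sym)
qed

end

lemma prod_primes_dvd:
  fixes D :: "nat set"
  assumes "finite D" "\<forall>q\<in>D. prime q \<and> q dvd m"
  shows "\<Prod>D dvd m"
  using assms
proof (induction D rule: finite_induct)
  case empty then show ?case by simp
next
  case (insert q D)
  have q: "prime q" "q dvd m" using insert by auto
  have IH: "\<Prod>D dvd m" using insert by auto
  have "\<not> q dvd \<Prod>D"
  proof
    assume "q dvd \<Prod>D"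
    then obtain x where x: "x \<in> D" "q dvd x" using prime_dvd_prod_iff[OF insert(1) q(1), of id] by auto
    then have "prime x" using insert by auto
    then have "q = x" using primes_dvd_imp_eq[OF q(1)] x by blast
    then show False using x insert(2) by simp
  qed
  then have "coprime q (\<Prod>D)" using prime_imp_coprime[OF q(1)] by blast
  then have "q * \<Prod>D dvd m" using divides_mult[OF q(2) IH] by blast
  then show ?case using insert by simp
qed

locale msetup = oddp +
  fixes m :: nat
  assumes m2: "m > 2" and pm: "\<not> p dvd m"
begin

definition nD :: "nat set \<Rightarrow> nat" where "nD D = m div \<Prod>D"

lemma finP: "finite (prime_factors m)" by simp

lemma P_prime: "q \<in> prime_factors m \<Longrightarrow> prime q" by auto

lemma P_dvd: "q \<in> prime_factors m \<Longrightarrow> q dvd m" by (simp add: in_prime_factors_iff)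

lemma P_ne: "prime_factors m \<noteq> {}"
proof -
  obtain q where "prime q" "q dvd m" using prime_factor_nat[of m] m2 by auto
  then have "q \<in> prime_factors m" using m2 by (simp add: in_prime_factors_iff)
  then show ?thesis by blast
qed

lemma prodD_dvd: assumes "D \<subseteq> prime_factors m" shows "\<Prod>D dvd m"
proof (rule prod_primes_dvd)
  show "finite D" using assms finP finite_subset by blast
  show "\<forall>q\<in>D. prime q \<and> q dvd m" using assms P_prime P_dvd by blast
qed

lemma prodD_pos: assumes "D \<subseteq> prime_factors m" shows "\<Prod>D > 0"
proof -
  have "\<forall>q\<in>D. q > 0" using assms P_prime prime_gt_0_nat by blast
  then show ?thesis by (simp add: prod_pos)
qed

lemma nD_mult: assumes "D \<subseteq> prime_factors m" shows "nD D * \<Prod>D = m"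
  unfolding nD_def using prodD_dvd[OF assms] by simp

lemma nD_pos: assumes "D \<subseteq> prime_factors m" shows "nD D > 0"
proof (rule ccontr)
  assume "\<not> nD D > 0"
  then have "nD D = 0" by simp
  then have "m = 0" using nD_mult[OF assms] by simp
  then show False using m2 by simp
qed

lemma nD_dvd: assumes "D \<subseteq> prime_factors m" shows "nD D dvd m"
proof -
  have "nD D dvd nD D * \<Prod>D" by simp
  then show ?thesis unfolding nD_mult[OF assms] .
qed

lemma nD_ndvd: assumes "D \<subseteq> prime_factors m" shows "\<not> p dvd nD D"
  using nD_dvd[OF assms] pm dvd_trans by blast

lemma nD_insert:
  assumes "q \<in> prime_factors m" "D \<subseteq> prime_factors m - {q}"
  shows "q * nD (insert q D) = nD D"
proof -
  have D: "D \<subseteq> prime_factors m" using assms by auto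
  have iD: "insert q D \<subseteq> prime_factors m" using assms by auto
  have fD: "finite D" using D finP finite_subset by blast
  have qD: "q \<notin> D" using assms by auto
  have "\<Prod>(insert q D) = q * \<Prod>D" using fD qD by simp
  then have "(q * nD (insert q D)) * \<Prod>D = nD D * \<Prod>D"
    using nD_mult[OF iD] nD_mult[OF D] by (simp add: ac_simps)
  then show ?thesis using prodD_pos[OF D] by simp
qed

lemma coprime_iff_P: assumes "k > 0" shows "coprime k m \<longleftrightarrow> (\<forall>q\<in>prime_factors m. \<not> q dvd k)"
proof
  assume c: "coprime k m"
  show "\<forall>q\<in>prime_factors m. \<not> q dvd k"
  proof (intro ballI notI)
    fix q assume q: "q \<in> prime_factors m" "q dvd k"
    then have "q = 1" using coprime_common_divisor_nat[OF c] P_dvd by blast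
    then show False using P_prime[OF q(1)] by simp
  qed
next
  assume a: "\<forall>q\<in>prime_factors m. \<not> q dvd k"
  show "coprime k m"
  proof (rule ccontr)
    assume "\<not> coprime k m"
    then have "gcd k m \<noteq> 1" using coprime_iff_gcd_eq_1 by blast
    then obtain q where q: "prime q" "q dvd gcd k m" using prime_factor_nat by blast
    then have "q dvd k" "q dvd m" by auto
    then have "q \<in> prime_factors m" using q m2 by (simp add: in_prime_factors_iff)
    then show False using a \<open>q dvd k\<close> by blast
  qed
qed

lemma SS_P: "SS c (prime_factors m) m = {k. 0 < k \<and> c * k < m \<and> coprime k m}"
proof (rule Set.set_eqI)
  fix k
  show "k \<in> SS c (prime_factors m) m \<longleftrightarrow> k \<in> {k. 0 < k \<and> c * k < m \<and> coprime k m}"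
  proof (cases "k > 0")
    case True
    then show ?thesis unfolding SS_def using coprime_iff_P[OF True] by simp
  next
    case False
    then show ?thesis unfolding SS_def by simp
  qed
qed

lemma card_SS1: "card (SS 1 (prime_factors m) m) = totient m"
proof -
  have "SS 1 (prime_factors m) m = totatives m"
  proof (rule Set.set_eqI)
    fix k
    have nm: "\<not> coprime m m" using m2 by simp
    show "k \<in> SS 1 (prime_factors m) m \<longleftrightarrow> k \<in> totatives m"
    proof
      assume "k \<in> SS 1 (prime_factors m) m"
      then show "k \<in> totatives m" unfolding SS_P totatives_def by simp
    next
      assume k: "k \<in> totatives m"
      then have "0 < k" "k \<le> m" "coprime k m" unfolding totatives_def by auto
      moreover have "k \<noteq> m" using nm \<open>coprime k m\<close> by blast
      ultimately show "k \<in> SS 1 (prime_factors m) m" unfolding SS_P by simp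
    qed
  qed
  then show ?thesis by (simp add: totient_def)
qed

lemma card_SS1_empty: "n > 0 \<Longrightarrow> card (SS 1 {} n) = n - 1"
proof -
  have "SS 1 {} n = {1..<n}" unfolding SS_def by (rule Set.set_eqI) auto
  then show "card (SS 1 {} n) = n - 1" by simp
qed

lemma IEm:
  fixes F :: "nat \<Rightarrow> nat \<Rightarrow> 'a::comm_ring_1"
  assumes "c > 0" and "\<And>q k n. q > 0 \<Longrightarrow> F (q * k) (q * n) = F k n"
  shows "(\<Sum>k\<in>SS c (prime_factors m) m. F k m) = (\<Sum>D\<in>Pow (prime_factors m). (-1) ^ card D * (\<Sum>k\<in>SS c {} (nD D). F k (nD D)))"
  unfolding nD_def
proof (rule IE[where F=F and c=c and P="prime_factors m" and n=m])
  show "\<forall>q\<in>prime_factors m. prime q" using P_prime by blast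
  show "\<forall>q\<in>prime_factors m. q dvd m" using P_dvd by blast
  show "c > 0" by (rule assms(1))
  show "finite (prime_factors m)" by (rule finP)
  show "\<And>q k n. q > 0 \<Longrightarrow> F (q * k) (q * n) = F k n" by (rule assms(2))
qed

lemma phi_sum: "int (totient m) = (\<Sum>D\<in>Pow (prime_factors m). (-1) ^ card D * int (nD D))"
proof -
  have "int (totient m) = (\<Sum>k\<in>SS 1 (prime_factors m) m. (1::int))" using card_SS1 by simp
  also have "\<dots> = (\<Sum>D\<in>Pow (prime_factors m). (-1) ^ card D * (\<Sum>k\<in>SS 1 {} (nD D). (1::int)))"
    by (rule IEm) simp_all
  also have "\<dots> = (\<Sum>D\<in>Pow (prime_factors m). (-1) ^ card D * int (nD D) - (-1) ^ card D)"
  proof (rule sum.cong)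
    fix D assume D: "D \<in> Pow (prime_factors m)"
    then have "nD D > 0" using nD_pos by blast
    then show "(-1) ^ card D * (\<Sum>k\<in>SS 1 {} (nD D). (1::int)) = (-1) ^ card D * int (nD D) - (-1) ^ card D"
      using card_SS1_empty by (simp add: of_nat_diff algebra_simps)
  qed simp
  also have "\<dots> = (\<Sum>D\<in>Pow (prime_factors m). (-1) ^ card D * int (nD D)) - (\<Sum>D\<in>Pow (prime_factors m). (-1::int) ^ card D)"
    by (simp add: sum_subtractf)
  also have "(\<Sum>D\<in>Pow (prime_factors m). (-1::int) ^ card D) = 0"
    by (rule sum_Pow_sign[OF finP P_ne])
  finally show ?thesis by simp
qed

definition Xq :: "nat \<Rightarrow> int" where
  "Xq q = (\<Sum>D\<in>Pow (prime_factors m - {q}). (-1) ^ card D * int (nD (insert q D)))"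

lemma P_split: "q \<in> prime_factors m \<Longrightarrow> prime_factors m = insert q (prime_factors m - {q})"
  by auto

lemma phi_Xq: assumes q: "q \<in> prime_factors m" shows "int (totient m) = (int q - 1) * Xq q"
proof -
  have f: "finite (prime_factors m - {q})" by simp
  have n: "q \<notin> prime_factors m - {q}" by simp
  have "int (totient m) = (\<Sum>D\<in>Pow (insert q (prime_factors m - {q})). (-1) ^ card D * int (nD D))"
    using phi_sum P_split[OF q] by simp
  also have "\<dots> = (\<Sum>D\<in>Pow (prime_factors m - {q}). (-1) ^ card D * int (nD D) + (-1) ^ card (insert q D) * int (nD (insert q D)))"
    by (rule sum_Pow_insert[OF f n])
  also have "\<dots> = (\<Sum>D\<in>Pow (prime_factors m - {q}). (int q - 1) * ((-1) ^ card D * int (nD (insert q D))))"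
  proof (rule sum.cong)
    fix D assume D: "D \<in> Pow (prime_factors m - {q})"
    have c: "card (insert q D) = Suc (card D)" by (rule card_insert_Pow[OF f n D])
    have "D \<subseteq> prime_factors m - {q}" using D by simp
    then have "nD D = q * nD (insert q D)" using nD_insert[OF q] by simp
    then have e: "int (nD D) = int q * int (nD (insert q D))" by simp
    show "(-1) ^ card D * int (nD D) + (-1) ^ card (insert q D) * int (nD (insert q D)) = (int q - 1) * ((-1) ^ card D * int (nD (insert q D)))"
      unfolding c e by (simp add: algebra_simps)
  qed simp
  also have "\<dots> = (int q - 1) * Xq q" unfolding Xq_def by (simp add: sum_distrib_left)
  finally show ?thesis .
qed

lemma alpha_Xq: assumes q: "q \<in> prime_factors m"
  shows "(\<Sum>D\<in>Pow (prime_factors m). (-1) ^ card D * int (nD D) * (int (multiplicity q m) - (if q \<in> D then 1 else 0)))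
       = (int (multiplicity q m) * int q - int (multiplicity q m) + 1) * Xq q"
proof -
  define a where "a = int (multiplicity q m)"
  have f: "finite (prime_factors m - {q})" by simp
  have n: "q \<notin> prime_factors m - {q}" by simp
  have "(\<Sum>D\<in>Pow (prime_factors m). (-1) ^ card D * int (nD D) * (a - (if q \<in> D then 1 else 0)))
     = (\<Sum>D\<in>Pow (insert q (prime_factors m - {q})). (-1) ^ card D * int (nD D) * (a - (if q \<in> D then 1 else 0)))"
    using P_split[OF q] by simp
  also have "\<dots> = (\<Sum>D\<in>Pow (prime_factors m - {q}). (-1) ^ card D * int (nD D) * (a - (if q \<in> D then 1 else 0))
      + (-1) ^ card (insert q D) * int (nD (insert q D)) * (a - (if q \<in> insert q D then 1 else 0)))"
    by (rule sum_Pow_insert[OF f n])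
  also have "\<dots> = (\<Sum>D\<in>Pow (prime_factors m - {q}). (a * int q - a + 1) * ((-1) ^ card D * int (nD (insert q D))))"
  proof (rule sum.cong)
    fix D assume D: "D \<in> Pow (prime_factors m - {q})"
    have c: "card (insert q D) = Suc (card D)" by (rule card_insert_Pow[OF f n D])
    have "D \<subseteq> prime_factors m - {q}" using D by simp
    then have "nD D = q * nD (insert q D)" using nD_insert[OF q] by simp
    then have e: "int (nD D) = int q * int (nD (insert q D))" by simp
    have qD: "q \<notin> D" using D by auto
    show "(-1) ^ card D * int (nD D) * (a - (if q \<in> D then 1 else 0))
      + (-1) ^ card (insert q D) * int (nD (insert q D)) * (a - (if q \<in> insert q D then 1 else 0))
      = (a * int q - a + 1) * ((-1) ^ card D * int (nD (insert q D)))"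
      unfolding c e using qD by (simp add: algebra_simps)
  qed simp
  also have "\<dots> = (a * int q - a + 1) * Xq q" unfolding Xq_def by (simp add: sum_distrib_left)
  finally show ?thesis unfolding a_def .
qed

end

context oddp
begin

definition U :: "nat \<Rightarrow> int" where "U n = int n ^ (p - 1) - 1"

lemma U_dvd: "\<not> p dvd a \<Longrightarrow> int p dvd U a"
  unfolding U_def using fermat_int by (simp add: cong_iff_dvd_diff)

lemma U_mult: assumes "\<not> p dvd a" "\<not> p dvd b" shows "[U (a * b) = U a + U b] (mod (int p ^ 2))"
proof -
  have "U (a * b) - (U a + U b) = U a * U b" unfolding U_def by (simp add: power_mult_distrib algebra_simps)
  moreover have "int p ^ 2 dvd U a * U b" using U_dvd[OF assms(1)] U_dvd[OF assms(2)]
    by (simp add: power2_eq_square mult_dvd_mono)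
  ultimately show ?thesis by (simp add: cong_iff_dvd_diff)
qed

lemma U_1: "U 1 = 0" unfolding U_def by simp

lemma U_pow: assumes "\<not> p dvd a" shows "[U (a ^ k) = int k * U a] (mod (int p ^ 2))"
proof (induction k)
  case 0 then show ?case using U_1 by simp
next
  case (Suc k)
  have nk: "\<not> p dvd a ^ k" using assms p_prime prime_dvd_power by blast
  have "[U (a ^ Suc k) = U a + U (a ^ k)] (mod (int p ^ 2))" using U_mult[OF assms nk] by simp
  moreover have "[U a + U (a ^ k) = U a + int k * U a] (mod (int p ^ 2))"
    using Suc by (intro cong_add cong_refl)
  ultimately have "[U (a ^ Suc k) = U a + int k * U a] (mod (int p ^ 2))" by (rule cong_trans)
  then show ?case by (simp add: algebra_simps)
qed

lemma U_prod: assumes "finite A" "\<forall>x\<in>A. \<not> p dvd g x"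
  shows "[U (\<Prod>x\<in>A. g x) = (\<Sum>x\<in>A. U (g x))] (mod (int p ^ 2))"
  using assms
proof (induction A rule: finite_induct)
  case empty then show ?case using U_1 by simp
next
  case (insert a A)
  have na: "\<not> p dvd g a" using insert by simp
  have nA: "\<not> p dvd (\<Prod>x\<in>A. g x)"
  proof
    assume "p dvd (\<Prod>x\<in>A. g x)"
    then obtain x where "x \<in> A" "p dvd g x" using prime_dvd_prod_iff[OF insert(1) p_prime] by blast
    then show False using insert by auto
  qed
  have "[U (\<Prod>x\<in>insert a A. g x) = U (g a) + U (\<Prod>x\<in>A. g x)] (mod (int p ^ 2))"
    using U_mult[OF na nA] insert by simp
  moreover have "[U (g a) + U (\<Prod>x\<in>A. g x) = U (g a) + (\<Sum>x\<in>A. U (g x))] (mod (int p ^ 2))"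
    using insert by (intro cong_add cong_refl) simp
  ultimately show ?case using insert cong_trans by simp
qed

end

context msetup
begin

lemma P_ndvd: "q \<in> prime_factors m \<Longrightarrow> \<not> p dvd q"
  using P_dvd pm dvd_trans by blast

lemma U_nD: assumes D: "D \<subseteq> prime_factors m"
  shows "[U (nD D) = (\<Sum>q\<in>prime_factors m. (int (multiplicity q m) - (if q \<in> D then 1 else 0)) * U q)] (mod (int p ^ 2))"
proof -
  have fD: "finite D" using D finP finite_subset by blast
  have m_eq: "m = (\<Prod>q\<in>prime_factors m. q ^ multiplicity q m)" using prime_factorization_nat m2 by simp
  have Um: "[U m = (\<Sum>q\<in>prime_factors m. int (multiplicity q m) * U q)] (mod (int p ^ 2))"
  proof -
    have "[U (\<Prod>q\<in>prime_factors m. q ^ multiplicity q m) = (\<Sum>q\<in>prime_factors m. U (q ^ multiplicity q m))] (mod (int p ^ 2))"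
    proof (rule U_prod[OF finP])
      show "\<forall>x\<in>prime_factors m. \<not> p dvd x ^ multiplicity x m"
        using P_ndvd p_prime prime_dvd_power by blast
    qed
    moreover have "[(\<Sum>q\<in>prime_factors m. U (q ^ multiplicity q m)) = (\<Sum>q\<in>prime_factors m. int (multiplicity q m) * U q)] (mod (int p ^ 2))"
      by (rule cong_sum) (use U_pow P_ndvd in blast)
    ultimately show ?thesis using m_eq cong_trans by simp
  qed
  have UD: "[U (\<Prod>D) = (\<Sum>q\<in>prime_factors m. (if q \<in> D then 1 else 0) * U q)] (mod (int p ^ 2))"
  proof -
    have "[U (\<Prod>q\<in>D. q) = (\<Sum>q\<in>D. U q)] (mod (int p ^ 2))"
      by (rule U_prod[OF fD]) (use D P_ndvd in blast)
    moreover have "(\<Sum>q\<in>D. U q) = (\<Sum>q\<in>prime_factors m. (if q \<in> D then 1 else 0) * U q)"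
    proof -
      have "(\<Sum>q\<in>prime_factors m. (if q \<in> D then 1 else 0) * U q) = (\<Sum>q\<in>prime_factors m. if q \<in> D then U q else 0)"
        by (rule sum.cong) simp_all
      also have "\<dots> = (\<Sum>q\<in>prime_factors m \<inter> D. U q)" by (rule sum.inter_restrict[symmetric]) simp
      also have "prime_factors m \<inter> D = D" using D by blast
      finally show ?thesis by simp
    qed
    ultimately show ?thesis by simp
  qed
  have nn: "\<not> p dvd nD D" by (rule nD_ndvd[OF D])
  have nP: "\<not> p dvd \<Prod>D"
  proof
    assume "p dvd \<Prod>D"
    then have "p dvd m" using prodD_dvd[OF D] dvd_trans by blast
    then show False using pm by simp
  qed
  have "[U m = U (nD D) + U (\<Prod>D)] (mod (int p ^ 2))"
    using U_mult[OF nn nP] nD_mult[OF D] by simp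
  then have "[U (nD D) + U (\<Prod>D) = (\<Sum>q\<in>prime_factors m. int (multiplicity q m) * U q)] (mod (int p ^ 2))"
    using Um cong_sym cong_trans by blast
  then have "[U (nD D) = (\<Sum>q\<in>prime_factors m. int (multiplicity q m) * U q) - U (\<Prod>D)] (mod (int p ^ 2))"
    by (simp add: cong_iff_dvd_diff algebra_simps)
  moreover have "[(\<Sum>q\<in>prime_factors m. int (multiplicity q m) * U q) - U (\<Prod>D)
      = (\<Sum>q\<in>prime_factors m. int (multiplicity q m) * U q) - (\<Sum>q\<in>prime_factors m. (if q \<in> D then 1 else 0) * U q)] (mod (int p ^ 2))"
    by (rule cong_diff[OF cong_refl UD])
  ultimately have "[U (nD D) = (\<Sum>q\<in>prime_factors m. int (multiplicity q m) * U q) - (\<Sum>q\<in>prime_factors m. (if q \<in> D then 1 else 0) * U q)] (mod (int p ^ 2))"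
    by (rule cong_trans)
  then show ?thesis by (simp add: sum_subtractf left_diff_distrib)
qed

end

context msetup
begin

abbreviation "S1 \<equiv> SS 1 (prime_factors m) m"
abbreviation "S2 \<equiv> SS 2 (prime_factors m) m"

lemma P_ndvd_diff: assumes "0 < k" "k < m" shows "(\<forall>q\<in>prime_factors m. \<not> q dvd m - k) \<longleftrightarrow> (\<forall>q\<in>prime_factors m. \<not> q dvd k)"
proof -
  have "\<And>q. q \<in> prime_factors m \<Longrightarrow> q dvd m - k \<longleftrightarrow> q dvd k"
  proof -
    fix q assume q: "q \<in> prime_factors m"
    then have qm: "q dvd m" by (rule P_dvd)
    show "q dvd m - k \<longleftrightarrow> q dvd k"
    proof
      assume "q dvd m - k"
      then have "q dvd m - (m - k)" using qm dvd_diff_nat by blast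
      then show "q dvd k" using assms by simp
    next
      assume "q dvd k" then show "q dvd m - k" using qm dvd_diff_nat by blast
    qed
  qed
  then show ?thesis by blast
qed

lemma half_not: "\<not> (k \<in> S1 \<and> 2 * k = m)"
proof
  assume a: "k \<in> S1 \<and> 2 * k = m"
  then have "k \<noteq> 1" using m2 by auto
  then obtain q where q: "prime q" "q dvd k" using prime_factor_nat by blast
  then have "q dvd m" using a by auto
  then have "q \<in> prime_factors m" using q m2 by (simp add: in_prime_factors_iff)
  then show False using a q by (simp add: SS_def)
qed

lemma S1_split: "S1 = S2 \<union> (\<lambda>k. m - k) ` S2" "S2 \<inter> (\<lambda>k. m - k) ` S2 = {}" "inj_on (\<lambda>k. m - k) S2"
proof -
  show "S1 = S2 \<union> (\<lambda>k. m - k) ` S2"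
  proof (rule equalityI; rule subsetI)
    fix k assume k: "k \<in> S1"
    show "k \<in> S2 \<union> (\<lambda>k. m - k) ` S2"
    proof (cases "2 * k < m")
      case True then show ?thesis using k by (simp add: SS_def)
    next
      case False
      then have "2 * k > m" using half_not[of k] k by auto
      moreover have "0 < k" "k < m" "\<forall>q\<in>prime_factors m. \<not> q dvd k" using k by (auto simp: SS_def)
      ultimately have "m - k \<in> S2" using P_ndvd_diff[of k] by (simp add: SS_def)
      moreover have "k = m - (m - k)" using \<open>k < m\<close> by simp
      ultimately show ?thesis by blast
    qed
  next
    fix k assume "k \<in> S2 \<union> (\<lambda>k. m - k) ` S2"
    then show "k \<in> S1"
    proof
      assume "k \<in> S2" then show "k \<in> S1" by (simp add: SS_def)
    next
      assume "k \<in> (\<lambda>k. m - k) ` S2"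
      then obtain k' where k': "k' \<in> S2" "k = m - k'" by blast
      then have "0 < k'" "2 * k' < m" "\<forall>q\<in>prime_factors m. \<not> q dvd k'" by (auto simp: SS_def)
      then show "k \<in> S1" using P_ndvd_diff[of k'] k'(2) by (simp add: SS_def)
    qed
  qed
  show "S2 \<inter> (\<lambda>k. m - k) ` S2 = {}"
  proof (rule ccontr)
    assume "S2 \<inter> (\<lambda>k. m - k) ` S2 \<noteq> {}"
    then obtain k k' where "k \<in> S2" "k' \<in> S2" "k = m - k'" by blast
    then have "2 * (m - k') < m" "2 * k' < m" by (auto simp: SS_def)
    then show False by linarith
  qed
  show "inj_on (\<lambda>k. m - k) S2"
  proof (rule inj_onI)
    fix x y assume "x \<in> S2" "y \<in> S2" "m - x = m - y"
    then have "2 * x < m" "2 * y < m" "m - x = m - y" by (auto simp: SS_def)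
    then show "x = y" by linarith
  qed
qed

lemma card_S2: "card S2 = totient m div 2"
proof -
  have fin: "finite S2" by (rule SS_finite) simp
  have "card S1 = card S2 + card ((\<lambda>k. m - k) ` S2)"
    using S1_split(1,2) fin by (simp add: card_Un_disjoint)
  also have "card ((\<lambda>k. m - k) ` S2) = card S2" using S1_split(3) by (simp add: card_image)
  finally show ?thesis using card_SS1 by simp
qed

lemma div_compl: assumes k: "k \<in> S2" shows "p * (m - k) div m = p - 1 - p * k div m"
proof -
  define j where "j = p * k div m"
  define r where "r = p * k mod m"
  have k1: "0 < k" "2 * k < m" "\<forall>q\<in>prime_factors m. \<not> q dvd k" using k by (auto simp: SS_def)
  have pk: "p * k = m * j + r" unfolding j_def r_def by simp
  have rm: "r < m" unfolding r_def using m2 by simp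
  have r0: "r \<noteq> 0"
  proof
    assume "r = 0"
    then have "m dvd p * k" unfolding r_def by auto
    moreover have "coprime m p" using pm p_prime prime_imp_coprime coprime_commute by blast
    ultimately have "m dvd k" using coprime_dvd_mult_right_iff by blast
    then have "m \<le> k" using dvd_imp_le k1(1) by blast
    then show False using k1(2) by linarith
  qed
  have jp: "j < p"
  proof -
    have "p * k < p * m" using k1 p_gt2 by simp
    then show ?thesis unfolding j_def using div_less_iff_less_mult[of m "p * k" p] m2 by (simp add: mult.commute)
  qed
  have km: "k < m" using k1 by simp
  have a: "int (p * (m - k)) = int p * int m - int p * int k" using km by (simp add: of_nat_diff right_diff_distrib)
  have b: "int (m * (p - 1 - j) + (m - r)) = int m * (int p - 1 - int j) + (int m - int r)"
    using jp rm by (simp add: of_nat_diff)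
  have c: "int p * int k = int m * int j + int r" using arg_cong[OF pk, of int] by simp
  have "int (p * (m - k)) = int (m * (p - 1 - j) + (m - r))"
    unfolding a b using c by (simp add: algebra_simps)
  then have eq: "p * (m - k) = m * (p - 1 - j) + (m - r)" by (simp only: of_nat_eq_iff)
  show ?thesis unfolding eq j_def[symmetric]
  proof (rule div_nat_eqI)
    show "m * (p - 1 - j) \<le> m * (p - 1 - j) + (m - r)" by simp
    show "m * (p - 1 - j) + (m - r) < m * Suc (p - 1 - j)" using r0 rm by simp
  qed
qed

lemma sym_H: "[(\<Sum>k\<in>S1. H (p * k div m)) = 2 * (\<Sum>k\<in>S2. H (p * k div m))] (mod int p)"
proof -
  have fin: "finite S2" by (rule SS_finite) simp
  have "(\<Sum>k\<in>S1. H (p * k div m)) = (\<Sum>k\<in>S2. H (p * k div m)) + (\<Sum>k\<in>(\<lambda>k. m - k) ` S2. H (p * k div m))"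
    unfolding S1_split(1) using S1_split(2) fin by (simp add: sum.union_disjoint)
  also have "(\<Sum>k\<in>(\<lambda>k. m - k) ` S2. H (p * k div m)) = (\<Sum>k\<in>S2. H (p * (m - k) div m))"
    using S1_split(3) by (simp add: sum.reindex)
  finally have e: "(\<Sum>k\<in>S1. H (p * k div m)) = (\<Sum>k\<in>S2. H (p * k div m)) + (\<Sum>k\<in>S2. H (p * (m - k) div m))" .
  have "[(\<Sum>k\<in>S2. H (p * (m - k) div m)) = (\<Sum>k\<in>S2. H (p * k div m))] (mod int p)"
  proof (rule cong_sum)
    fix k assume k: "k \<in> S2"
    have "p * k div m \<le> p - 1"
    proof -
      have "2 * k < m" using k by (simp add: SS_def)
      then have "p * k < p * m" using p_gt2 by simp
      then have "p * k div m < p" using div_less_iff_less_mult[of m "p * k" p] m2 by (simp add: mult.commute)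
      then show ?thesis by simp
    qed
    then show "[H (p * (m - k) div m) = H (p * k div m)] (mod int p)"
      unfolding div_compl[OF k] by (rule H_sym)
  qed
  then have "[(\<Sum>k\<in>S2. H (p * k div m)) + (\<Sum>k\<in>S2. H (p * (m - k) div m)) = (\<Sum>k\<in>S2. H (p * k div m)) + (\<Sum>k\<in>S2. H (p * k div m))] (mod int p)"
    by (intro cong_add cong_refl)
  then show ?thesis unfolding e by simp
qed

end

context msetup
begin

lemma IE_H: "(\<Sum>k\<in>S1. H (p * k div m)) = (\<Sum>D\<in>Pow (prime_factors m). (-1) ^ card D * (\<Sum>k\<in>SS 1 {} (nD D). H (p * k div nD D)))"
proof (rule IEm[where F="\<lambda>k n. H (p * k div n)"])
  fix q k n :: nat assume q: "q > 0"
  have "p * (q * k) div (q * n) = (q * (p * k)) div (q * n)" by (simp add: ac_simps)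
  also have "\<dots> = p * k div n" using q by simp
  finally show "H (p * (q * k) div (q * n)) = H (p * k div n)" by simp
qed simp

lemma base_nD: assumes D: "D \<subseteq> prime_factors m"
  shows "[int p * (\<Sum>k\<in>SS 1 {} (nD D). H (p * k div nD D)) = - (int (nD D) * U (nD D))] (mod (int p ^ 2))"
proof -
  have n: "nD D > 0" "\<not> p dvd nD D" using nD_pos[OF D] nD_ndvd[OF D] by auto
  have c1: "[int p * (\<Sum>k\<in>SS 1 {} (nD D). H (p * k div nD D)) = int p * (- (\<Sum>i\<in>{1..p - 1}. int (i * nD D div p) * u i))] (mod (int p ^ 2))"
    by (rule cong_pmult[OF base_H[OF n]])
  have Fi: "[int p * (\<Sum>i\<in>{1..p - 1}. int (i * nD D div p) * u i) = int (nD D) * U (nD D)] (mod (int p ^ 2))"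
    using F_ident[OF n(2)] unfolding U_def .
  have c2: "[int p * (- (\<Sum>i\<in>{1..p - 1}. int (i * nD D div p) * u i)) = - (int (nD D) * U (nD D))] (mod (int p ^ 2))"
    using cong_minus_minus_iff[THEN iffD2, OF Fi] by simp
  show ?thesis using c1 c2 by (rule cong_trans)
qed

lemma mag1: "[int p * (\<Sum>k\<in>S1. H (p * k div m)) = - (\<Sum>D\<in>Pow (prime_factors m). (-1) ^ card D * (int (nD D) * U (nD D)))] (mod (int p ^ 2))"
proof -
  have "int p * (\<Sum>k\<in>S1. H (p * k div m)) = (\<Sum>D\<in>Pow (prime_factors m). (-1) ^ card D * (int p * (\<Sum>k\<in>SS 1 {} (nD D). H (p * k div nD D))))"
    unfolding IE_H by (simp add: sum_distrib_left ac_simps)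
  moreover have "[(\<Sum>D\<in>Pow (prime_factors m). (-1) ^ card D * (int p * (\<Sum>k\<in>SS 1 {} (nD D). H (p * k div nD D))))
     = (\<Sum>D\<in>Pow (prime_factors m). (-1) ^ card D * (- (int (nD D) * U (nD D))))] (mod (int p ^ 2))"
  proof (rule cong_sum)
    fix D assume "D \<in> Pow (prime_factors m)"
    then have D: "D \<subseteq> prime_factors m" by simp
    show "[(-1) ^ card D * (int p * (\<Sum>k\<in>SS 1 {} (nD D). H (p * k div nD D))) = (-1) ^ card D * (- (int (nD D) * U (nD D)))] (mod (int p ^ 2))"
      by (rule cong_scalar_left[OF base_nD[OF D]])
  qed
  ultimately show ?thesis by (simp add: sum_negf)
qed

lemma mag2: "[(\<Sum>D\<in>Pow (prime_factors m). (-1) ^ card D * (int (nD D) * U (nD D)))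
   = (\<Sum>q\<in>prime_factors m. (int (multiplicity q m) * int q - int (multiplicity q m) + 1) * Xq q * U q)] (mod (int p ^ 2))"
proof -
  have "[(\<Sum>D\<in>Pow (prime_factors m). (-1) ^ card D * (int (nD D) * U (nD D)))
     = (\<Sum>D\<in>Pow (prime_factors m). (-1) ^ card D * (int (nD D) * (\<Sum>q\<in>prime_factors m. (int (multiplicity q m) - (if q \<in> D then 1 else 0)) * U q)))] (mod (int p ^ 2))"
  proof (rule cong_sum)
    fix D assume "D \<in> Pow (prime_factors m)"
    then have D: "D \<subseteq> prime_factors m" by simp
    show "[(-1) ^ card D * (int (nD D) * U (nD D)) = (-1) ^ card D * (int (nD D) * (\<Sum>q\<in>prime_factors m. (int (multiplicity q m) - (if q \<in> D then 1 else 0)) * U q))] (mod (int p ^ 2))"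
      by (rule cong_scalar_left, rule cong_scalar_left, rule U_nD[OF D])
  qed
  also have "(\<Sum>D\<in>Pow (prime_factors m). (-1) ^ card D * (int (nD D) * (\<Sum>q\<in>prime_factors m. (int (multiplicity q m) - (if q \<in> D then 1 else 0)) * U q)))
     = (\<Sum>D\<in>Pow (prime_factors m). \<Sum>q\<in>prime_factors m. (-1) ^ card D * int (nD D) * (int (multiplicity q m) - (if q \<in> D then 1 else 0)) * U q)"
    by (simp add: sum_distrib_left ac_simps)
  also have "\<dots> = (\<Sum>q\<in>prime_factors m. \<Sum>D\<in>Pow (prime_factors m). (-1) ^ card D * int (nD D) * (int (multiplicity q m) - (if q \<in> D then 1 else 0)) * U q)"
    by (rule sum.swap)
  also have "\<dots> = (\<Sum>q\<in>prime_factors m. (\<Sum>D\<in>Pow (prime_factors m). (-1) ^ card D * int (nD D) * (int (multiplicity q m) - (if q \<in> D then 1 else 0))) * U q)"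
    by (simp add: sum_distrib_right)
  also have "\<dots> = (\<Sum>q\<in>prime_factors m. (int (multiplicity q m) * int q - int (multiplicity q m) + 1) * Xq q * U q)"
    by (rule sum.cong) (simp_all add: alpha_Xq)
  finally show ?thesis .
qed

lemma magnitude: "[2 * int p * (\<Sum>k\<in>S2. H (p * k div m))
   = - (\<Sum>q\<in>prime_factors m. (int (multiplicity q m) * int q - int (multiplicity q m) + 1) * Xq q * U q)] (mod (int p ^ 2))"
proof -
  have "[int p * (2 * (\<Sum>k\<in>S2. H (p * k div m))) = int p * (\<Sum>k\<in>S1. H (p * k div m))] (mod (int p ^ 2))"
    by (rule cong_pmult[OF cong_sym[OF sym_H]])
  moreover have "[int p * (\<Sum>k\<in>S1. H (p * k div m)) = - (\<Sum>q\<in>prime_factors m. (int (multiplicity q m) * int q - int (multiplicity q m) + 1) * Xq q * U q)] (mod (int p ^ 2))"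
    using cong_trans[OF mag1 cong_minus_minus_iff[THEN iffD2, OF mag2]] .
  ultimately show ?thesis using cong_trans by (simp add: ac_simps)
qed

end

context GAUSS
begin

lemma card_E_alt: "card E = card {i\<in>A. (int p - 1) div 2 < (i * a) mod int p}"
proof -
  have "E = (\<lambda>y::int. y mod int p) ` {y\<in>B. (int p - 1) div 2 < y mod int p}"
    unfolding E_def C_def by auto
  moreover have "inj_on (\<lambda>y::int. y mod int p) {y\<in>B. (int p - 1) div 2 < y mod int p}"
    using SR_B_inj by (rule inj_on_subset) auto
  ultimately have "card E = card {y\<in>B. (int p - 1) div 2 < y mod int p}" by (simp add: card_image)
  also have "{y\<in>B. (int p - 1) div 2 < y mod int p} = (\<lambda>x. x * a) ` {i\<in>A. (int p - 1) div 2 < (i * a) mod int p}"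
    unfolding B_def by auto
  also have "card \<dots> = card {i\<in>A. (int p - 1) div 2 < (i * a) mod int p}"
    using inj_on_xa_A by (intro card_image) (rule inj_on_subset, auto)
  finally show ?thesis .
qed

end

context oddp
begin

definition hh :: nat where "hh = (p - 1) div 2"
definition EE :: "nat \<Rightarrow> nat" where "EE n = (\<Sum>i\<in>{1..hh}. i * n div p)"

lemma p_hh: "p = 2 * hh + 1" unfolding hh_def using p_odd by simp

lemma twice_div: "i * (2 * x) div p = 2 * (i * x div p) + (if hh < i * x mod p then 1 else 0)"
proof -
  define d where "d = i * x div p"
  define r where "r = i * x mod p"
  have e: "i * (2 * x) = p * (2 * d) + 2 * r"
    unfolding d_def r_def by (metis (no_types, lifting) add_mult_distrib2 div_mult_mod_eq mult.assoc mult.commute mult.left_commute)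
  have rp: "r < p" unfolding r_def using p_gt2 by simp
  show ?thesis unfolding d_def[symmetric] r_def[symmetric] e
  proof (cases "hh < r")
    case True
    have "(p * (2 * d) + 2 * r) div p = 2 * d + 1"
      by (rule div_nat_eqI) (use True rp p_hh in \<open>simp_all add: algebra_simps\<close>)
    then show "(p * (2 * d) + 2 * r) div p = 2 * d + (if hh < r then 1 else 0)" using True by simp
  next
    case False
    have "(p * (2 * d) + 2 * r) div p = 2 * d"
      by (rule div_nat_eqI) (use False rp p_hh in \<open>simp_all add: algebra_simps\<close>)
    then show "(p * (2 * d) + 2 * r) div p = 2 * d + (if hh < r then 1 else 0)" using False by simp
  qed
qed

lemma EE_twice: "EE (2 * x) = 2 * EE x + card {i\<in>{1..hh}. hh < i * x mod p}"
proof -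
  have "EE (2 * x) = (\<Sum>i\<in>{1..hh}. 2 * (i * x div p) + (if hh < i * x mod p then 1 else 0))"
    unfolding EE_def using twice_div by simp
  also have "\<dots> = 2 * EE x + (\<Sum>i\<in>{1..hh}. if hh < i * x mod p then 1 else 0)"
    unfolding EE_def by (simp add: sum.distrib sum_distrib_left)
  also have "(\<Sum>i\<in>{1..hh}. if hh < i * x mod p then 1 else (0::nat)) = card {i\<in>{1..hh}. hh < i * x mod p}"
    by (simp add: sum.inter_filter[symmetric])
  finally show ?thesis .
qed

lemma gauss_EE: assumes x: "x > 0" "\<not> p dvd x"
  shows "[(-1::int) ^ EE (2 * x) = int x ^ hh] (mod int p)"
proof -
  interpret G: GAUSS p "int x"
  proof
    show "prime p" by (rule p_prime)
    show "2 < p" by (rule p_gt2)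
    show "[int x \<noteq> 0] (mod int p)" using x by (simp add: cong_0_iff)
    show "0 < int x" using x by simp
  qed
  have hint: "(int p - 1) div 2 = int hh" unfolding hh_def using p_gt2 by (simp add: zdiv_int of_nat_diff)
  have "card G.E = card {i\<in>G.A. int hh < (i * int x) mod int p}"
    using G.card_E_alt hint by simp
  also have "{i\<in>G.A. int hh < (i * int x) mod int p} = int ` {i\<in>{1..hh}. hh < i * x mod p}"
  proof (rule Set.set_eqI)
    fix i
    show "i \<in> {i\<in>G.A. int hh < (i * int x) mod int p} \<longleftrightarrow> i \<in> int ` {i\<in>{1..hh}. hh < i * x mod p}"
    proof
      assume "i \<in> {i\<in>G.A. int hh < (i * int x) mod int p}"
      then have i: "0 < i" "i \<le> int hh" "int hh < (i * int x) mod int p" unfolding G.A_def hint by auto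
      then have "i = int (nat i)" by simp
      moreover have "nat i \<in> {i\<in>{1..hh}. hh < i * x mod p}"
      proof -
        have "(i * int x) mod int p = int (nat i * x mod p)" using i by (simp add: zmod_int)
        then show ?thesis using i by auto
      qed
      ultimately show "i \<in> int ` {i\<in>{1..hh}. hh < i * x mod p}" by blast
    next
      assume "i \<in> int ` {i\<in>{1..hh}. hh < i * x mod p}"
      then obtain j where j: "i = int j" "j \<in> {1..hh}" "hh < j * x mod p" by blast
      have "(int j * int x) mod int p = int (j * x mod p)" by (simp add: zmod_int)
      then show "i \<in> {i\<in>G.A. int hh < (i * int x) mod int p}" using j unfolding G.A_def hint by auto
    qed
  qed
  also have "card \<dots> = card {i\<in>{1..hh}. hh < i * x mod p}" by (simp add: card_image)
  finally have cE: "card G.E = card {i\<in>{1..hh}. hh < i * x mod p}" .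
  have "[int x ^ nat ((int p - 1) div 2) = (-1) ^ card G.E] (mod int p)" by (rule G.pre_gauss_lemma)
  then have "[int x ^ hh = (-1) ^ card G.E] (mod int p)" using hint by simp
  moreover have "(-1::int) ^ card G.E = (-1) ^ EE (2 * x)"
    unfolding EE_twice cE by (simp add: power_add power_mult)
  ultimately show ?thesis by (simp add: cong_sym)
qed

end

context oddp
begin

definition psi :: "nat \<Rightarrow> int" where "psi n = (-1) ^ EE n"

definition cc :: nat where "cc = (\<Sum>i\<in>{1..hh}. i)"

lemma EE_shift: "EE (n + p) = EE n + cc"
proof -
  have "EE (n + p) = (\<Sum>i\<in>{1..hh}. i * n div p + i)"
    unfolding EE_def
  proof (rule sum.cong)
    fix i
    have "i * (n + p) = i * n + i * p" by (simp add: algebra_simps)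
    then show "i * (n + p) div p = i * n div p + i" using p_gt2 by simp
  qed simp
  then show ?thesis unfolding EE_def cc_def by (simp add: sum.distrib)
qed

lemma fermat_sq: assumes "\<not> p dvd y" shows "[(int y ^ hh) ^ 2 = 1] (mod int p)"
proof -
  have "p - 1 = hh * 2" using p_hh by simp
  then have "(int y ^ hh) ^ 2 = int y ^ (p - 1)" by (simp add: power_mult)
  then show ?thesis using fermat_int[OF assms] by simp
qed

lemma odd_psi: assumes x: "odd x" "\<not> p dvd x"
  shows "[(-1) ^ cc * psi x = int ((x + p) div 2) ^ hh] (mod int p)"
proof -
  define y where "y = (x + p) div 2"
  have xy: "x + p = 2 * y" unfolding y_def using x p_odd by simp
  have y0: "y > 0" using xy p_gt2 by simp
  have ny: "\<not> p dvd y"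
  proof
    assume "p dvd y"
    then have "p dvd x + p" unfolding xy by simp
    then have "p dvd x" by (simp add: dvd_add_left_iff)
    then show False using x by simp
  qed
  have "[(-1::int) ^ EE (2 * y) = int y ^ hh] (mod int p)" by (rule gauss_EE[OF y0 ny])
  moreover have "(-1::int) ^ EE (2 * y) = (-1) ^ cc * psi x"
    unfolding xy[symmetric] EE_shift psi_def by (simp add: power_add)
  ultimately show ?thesis unfolding y_def by simp
qed

lemma cong_pm1_mult: assumes "[a = b] (mod int p)" "[c = d] (mod int p)" shows "[a * c = b * d] (mod int p)"
  using assms by (rule cong_mult)

lemma psi_pair: assumes q: "odd q" "\<not> p dvd q" and x: "x > 0" "\<not> p dvd x"
  shows "[psi (q * x) * psi x = int q ^ hh] (mod int p)"
proof (cases "even x")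
  case True
  then obtain y where y: "x = 2 * y" by blast
  have y0: "y > 0" using x y by simp
  have ny: "\<not> p dvd y"
  proof
    assume "p dvd y" then have "p dvd x" unfolding y by simp
    then show False using x by simp
  qed
  have nqy: "\<not> p dvd q * y" using ny q p_prime prime_dvd_mult_iff by blast
  have "[psi (2 * (q * y)) = int (q * y) ^ hh] (mod int p)"
    unfolding psi_def using gauss_EE[of "q * y"] y0 nqy q odd_pos[OF q(1)] by simp
  moreover have "[psi (2 * y) = int y ^ hh] (mod int p)"
    unfolding psi_def using gauss_EE[OF y0 ny] .
  ultimately have "[psi (2 * (q * y)) * psi (2 * y) = int (q * y) ^ hh * int y ^ hh] (mod int p)"
    by (rule cong_mult)
  moreover have "int (q * y) ^ hh * int y ^ hh = int q ^ hh * (int y ^ hh) ^ 2"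
    by (simp add: power_mult_distrib power2_eq_square)
  moreover have "[int q ^ hh * (int y ^ hh) ^ 2 = int q ^ hh * 1] (mod int p)"
    by (rule cong_scalar_left[OF fermat_sq[OF ny]])
  ultimately have "[psi (2 * (q * y)) * psi (2 * y) = int q ^ hh * 1] (mod int p)"
    by (metis cong_trans)
  then show ?thesis using y by (simp add: ac_simps)
next
  case False
  have oqx: "odd (q * x)" using False q by simp
  have nqx: "\<not> p dvd q * x" using x q p_prime prime_dvd_mult_iff by blast
  define y1 where "y1 = (q * x + p) div 2"
  define y2 where "y2 = (x + p) div 2"
  have e1: "q * x + p = 2 * y1" unfolding y1_def using oqx p_odd by simp
  have e2: "x + p = 2 * y2" unfolding y2_def using False p_odd by simp
  have c1: "[(-1) ^ cc * psi (q * x) = int y1 ^ hh] (mod int p)" unfolding y1_def by (rule odd_psi[OF oqx nqx])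
  have c2: "[(-1) ^ cc * psi x = int y2 ^ hh] (mod int p)" unfolding y2_def by (rule odd_psi[OF False x(2)])
  have "[((-1) ^ cc * psi (q * x)) * ((-1) ^ cc * psi x) = int y1 ^ hh * int y2 ^ hh] (mod int p)"
    by (rule cong_mult[OF c1 c2])
  moreover have "((-1::int) ^ cc * psi (q * x)) * ((-1) ^ cc * psi x) = psi (q * x) * psi x"
  proof -
    have s1: "(-1::int) ^ cc * (-1) ^ cc = (-1) ^ (2 * cc)" by (simp add: power_add[symmetric] mult_2)
    have s2: "(-1::int) ^ (2 * cc) = 1" by (simp add: power_mult)
    have "((-1::int) ^ cc * psi (q * x)) * ((-1) ^ cc * psi x) = ((-1) ^ cc * (-1) ^ cc) * (psi (q * x) * psi x)"
      by (simp add: ac_simps)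
    then show ?thesis using s1 s2 by simp
  qed
  ultimately have A: "[psi (q * x) * psi x = (int y1 * int y2) ^ hh] (mod int p)"
    by (simp add: power_mult_distrib)
  have B1: "[int (2 * y1) * int (2 * y2) = int q * int x * int x] (mod int p)"
  proof -
    have "int (2 * y1) * int (2 * y2) = (int q * int x + int p) * (int x + int p)"
      using arg_cong[OF e1, of int] arg_cong[OF e2, of int] by simp
    also have "\<dots> = int q * int x * int x + int p * (int q * int x + int x + int p)"
      by (simp add: algebra_simps)
    finally show ?thesis by (simp add: cong_iff_dvd_diff)
  qed
  then have B2: "[(int (2 * y1) * int (2 * y2)) ^ hh = (int q * int x * int x) ^ hh] (mod int p)"
    by (rule cong_pow)
  have "(int q * int x * int x) ^ hh = int q ^ hh * (int x ^ hh) ^ 2"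
    by (simp add: power_mult_distrib power2_eq_square)
  moreover have "[int q ^ hh * (int x ^ hh) ^ 2 = int q ^ hh * 1] (mod int p)"
    by (rule cong_scalar_left[OF fermat_sq[OF x(2)]])
  ultimately have "[(int q * int x * int x) ^ hh = int q ^ hh * 1] (mod int p)" by simp
  then have B3: "[(int (2 * y1) * int (2 * y2)) ^ hh = int q ^ hh] (mod int p)"
    using B2 cong_trans by simp
  have f4: "(4::int) ^ hh = 2 ^ hh * 2 ^ hh" by (simp flip: power_mult_distrib)
  have E1: "(int (2 * y1) * int (2 * y2)) ^ hh = (int 2 ^ hh) ^ 2 * (int y1 * int y2) ^ hh"
    using f4 by (simp add: power_mult_distrib power2_eq_square)
  have C1: "[(int 2 ^ hh) ^ 2 * (int y1 * int y2) ^ hh = 1 * (int y1 * int y2) ^ hh] (mod int p)"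
  proof (rule cong_mult[OF _ cong_refl])
    have "\<not> p dvd 2" using p_gt2 by (auto dest: dvd_imp_le)
    then show "[(int 2 ^ hh) ^ 2 = 1] (mod int p)" by (rule fermat_sq)
  qed
  have "[(int (2 * y1) * int (2 * y2)) ^ hh = 1 * (int y1 * int y2) ^ hh] (mod int p)"
    unfolding E1 by (rule C1)
  then have "[(int (2 * y1) * int (2 * y2)) ^ hh = (int y1 * int y2) ^ hh] (mod int p)" by (simp only: mult_1)
  then have "[(int y1 * int y2) ^ hh = int q ^ hh] (mod int p)"
    using B3 cong_sym cong_trans by blast
  then show ?thesis using A cong_trans by blast
qed

lemma two_pow_psi: assumes "a \<ge> 2"
  shows "[psi (2 ^ a) * psi (2 ^ (a - 1)) = 2 ^ hh] (mod int p)"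
proof -
  define b where "b = a - 2"
  have ab: "a = b + 2" "a - 1 = b + 1" using assms unfolding b_def by simp_all
  have n2: "\<not> p dvd 2" using p_gt2 by (auto dest: dvd_imp_le)
  have npow: "\<And>k. \<not> p dvd 2 ^ k" using n2 p_prime prime_dvd_power by blast
  have a1: "(2::nat) ^ (b + 2) = 2 * 2 ^ (b + 1)" by simp
  have a2: "(2::nat) ^ (b + 1) = 2 * 2 ^ b" by simp
  have g1: "[psi (2 ^ (b + 2)) = int (2 ^ (b + 1)) ^ hh] (mod int p)"
    unfolding psi_def a1 by (rule gauss_EE) (use npow[of "b + 1"] in simp_all)
  have g2: "[psi (2 ^ (b + 1)) = int (2 ^ b) ^ hh] (mod int p)"
    unfolding psi_def a2 by (rule gauss_EE) (use npow[of b] in simp_all)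
  have c: "[psi (2 ^ (b + 2)) * psi (2 ^ (b + 1)) = int (2 ^ (b + 1)) ^ hh * int (2 ^ b) ^ hh] (mod int p)"
    by (rule cong_mult[OF g1 g2])
  have e: "int (2 ^ (b + 1)) ^ hh * int (2 ^ b) ^ hh = 2 ^ hh * ((int 2 ^ hh) ^ 2) ^ b"
  proof -
    have "int (2 ^ (b + 1)) ^ hh * int (2 ^ b) ^ hh = (2::int) ^ ((b + 1) * hh + b * hh)"
      by (simp add: power_mult[symmetric] power_add)
    also have "(b + 1) * hh + b * hh = hh + hh * 2 * b" by (simp add: algebra_simps)
    finally show ?thesis by (simp add: power_add power_mult)
  qed
  have f: "[2 ^ hh * ((int 2 ^ hh) ^ 2) ^ b = 2 ^ hh * 1 ^ b] (mod int p)"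
    by (intro cong_scalar_left cong_pow fermat_sq n2)
  have "[psi (2 ^ (b + 2)) * psi (2 ^ (b + 1)) = 2 ^ hh] (mod int p)"
    using cong_trans[OF c[unfolded e] f] by simp
  then show ?thesis using ab by simp
qed

end

lemma pm1_parity:
  fixes a b c :: nat
  assumes "even (int a + int b - int c)"
  shows "(-1::int) ^ a * (-1) ^ b = (-1) ^ c"
proof -
  have "even (a + b) \<longleftrightarrow> even c"
  proof -
    have "even (int (a + b) - int c)" using assms by simp
    then have "even (int (a + b)) \<longleftrightarrow> even (int c)" by (metis even_add diff_add_cancel)
    then show ?thesis by simp
  qed
  then show ?thesis by (auto simp add: power_add[symmetric] minus_one_power_iff)
qed

context msetup
begin

definition Lsym :: int where
  "Lsym = (if card (prime_factors m) = 1 then Legendre (int (the_elem (prime_factors m))) (int p) else 1)"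

lemma Legendre_pm1: assumes "\<not> p dvd q" shows "Legendre (int q) (int p) = 1 \<or> Legendre (int q) (int p) = -1"
proof -
  have "\<not> [int q = 0] (mod int p)" using assms by (simp add: cong_0_iff)
  then show ?thesis unfolding Legendre_def by auto
qed

lemma euler: assumes "\<not> p dvd q" shows "[int q ^ hh = Legendre (int q) (int p)] (mod int p)"
proof -
  have "[int q \<noteq> 0] (mod int p)" using assms by (simp add: cong_0_iff)
  then have "[Legendre (int q) (int p) = int q ^ ((p - 1) div 2)] (mod int p)"
    using euler_criterion[OF p_prime p_gt2] by blast
  then show ?thesis unfolding hh_def by (rule cong_sym)
qed

lemma Lsym_pm1: "Lsym = 1 \<or> Lsym = -1"
proof (cases "card (prime_factors m) = 1")
  case True
  then obtain q where q: "prime_factors m = {q}" using card_1_singletonE by blast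
  then have "q \<in> prime_factors m" by simp
  then show ?thesis unfolding Lsym_def using True q Legendre_pm1[OF P_ndvd] by simp
qed (simp add: Lsym_def)

lemma pm1_eq: assumes "a = 1 \<or> a = -1" "b = 1 \<or> b = (-1::int)" "[a = b] (mod int p)" shows "a = b"
proof (rule ccontr)
  assume "a \<noteq> b"
  then have "[1 = -1] (mod int p)" using assms by (auto simp: cong_sym)
  then have "int p dvd 2" by (simp add: cong_iff_dvd_diff)
  then have "p dvd 2" by (metis of_nat_dvd_iff of_nat_numeral)
  then show False using p_gt2 by (auto dest: dvd_imp_le)
qed

lemma prod_psi_cong: "[(\<Prod>D\<in>Pow (prime_factors m). psi (nD D)) = Lsym] (mod int p)"
proof (cases "\<exists>q\<in>prime_factors m. odd q")
  case True
  then obtain q where q: "q \<in> prime_factors m" "odd q" by blast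
  define P' where "P' = prime_factors m - {q}"
  have fP': "finite P'" unfolding P'_def by simp
  have qP': "q \<notin> P'" unfolding P'_def by simp
  have Pe: "prime_factors m = insert q P'" unfolding P'_def using q by auto
  have nq: "\<not> p dvd q" by (rule P_ndvd[OF q(1)])
  have "(\<Prod>D\<in>Pow (prime_factors m). psi (nD D)) = (\<Prod>D\<in>Pow P'. psi (nD D) * psi (nD (insert q D)))"
    unfolding Pe by (rule prod_Pow_insert[OF fP' qP'])
  moreover have "[(\<Prod>D\<in>Pow P'. psi (nD D) * psi (nD (insert q D))) = (\<Prod>D\<in>Pow P'. int q ^ hh)] (mod int p)"
  proof (rule cong_prod)
    fix D assume D: "D \<in> Pow P'"
    then have D': "D \<subseteq> prime_factors m - {q}" unfolding P'_def by simp
    have iD: "insert q D \<subseteq> prime_factors m" using D' q by auto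
    have e: "nD D = q * nD (insert q D)" using nD_insert[OF q(1) D'] by simp
    show "[psi (nD D) * psi (nD (insert q D)) = int q ^ hh] (mod int p)"
      unfolding e by (rule psi_pair[OF q(2) nq nD_pos[OF iD] nD_ndvd[OF iD]])
  qed
  ultimately have A: "[(\<Prod>D\<in>Pow (prime_factors m). psi (nD D)) = (int q ^ hh) ^ (2 ^ card P')] (mod int p)"
    using fP' by (simp add: card_Pow)
  show ?thesis
  proof (cases "P' = {}")
    case True
    then have P1: "prime_factors m = {q}" using Pe by simp
    have "Lsym = Legendre (int q) (int p)" unfolding Lsym_def P1 by simp
    moreover have "(int q ^ hh) ^ (2 ^ card P') = int q ^ hh" using True by simp
    ultimately show ?thesis using A euler[OF nq] cong_trans by simp
  next
    case False
    then have c1: "card P' \<ge> 1" using fP' by (simp add: Suc_le_eq card_gt_0_iff)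
    have "card (prime_factors m) = Suc (card P')" using Pe fP' qP' by simp
    then have "Lsym = 1" unfolding Lsym_def using c1 by simp
    moreover have "(int q ^ hh) ^ (2 ^ card P') = ((int q ^ hh) ^ 2) ^ (2 ^ (card P' - 1))"
    proof -
      have "(2::nat) ^ card P' = 2 * 2 ^ (card P' - 1)" using c1 by (metis Suc_diff_1 less_le_trans power_Suc zero_less_one)
      then show ?thesis by (simp add: power_mult)
    qed
    moreover have "[((int q ^ hh) ^ 2) ^ (2 ^ (card P' - 1)) = 1 ^ (2 ^ (card P' - 1))] (mod int p)"
      by (rule cong_pow[OF fermat_sq[OF nq]])
    ultimately show ?thesis using A cong_trans by simp
  qed
next
  case False
  have all2: "\<forall>q\<in>prime_factors m. q = 2"
  proof
    fix q assume qP: "q \<in> prime_factors m"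
    then have pq: "prime q" by (rule P_prime)
    have "even q" using False qP by blast
    then have "2 dvd q" by simp
    then show "q = 2" using pq unfolding prime_nat_iff by auto
  qed
  have sub: "prime_factors m \<subseteq> {2}"
  proof
    fix q assume "q \<in> prime_factors m" then show "q \<in> {2}" using all2 by simp
  qed
  have P2: "prime_factors m = {2}" using subset_singletonD[OF sub] P_ne by blast
  define a where "a = multiplicity 2 m"
  have ma: "m = 2 ^ a" using prime_factorization_nat[of m] m2 P2 unfolding a_def by simp
  have a2: "a \<ge> 2"
  proof (rule ccontr)
    assume "\<not> a \<ge> 2"
    then have "a \<le> 1" by simp
    then have "m \<le> 2" unfolding ma using power_increasing[of a 1 "2::nat"] by simp
    then show False using m2 by simp
  qed
  have "(\<Prod>D\<in>Pow (prime_factors m). psi (nD D)) = psi (nD {}) * psi (nD {2})"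
    unfolding P2 using prod_Pow_insert[of "{}" 2 "\<lambda>D. psi (nD D)"] by simp
  moreover have "nD {} = 2 ^ a" "nD {2} = 2 ^ (a - 1)"
  proof -
    have n0: "nD {} = m" by (simp add: nD_def)
    then show "nD {} = 2 ^ a" using ma by simp
    have n2: "nD {2} = m div 2" by (simp add: nD_def)
    have "(2::nat) ^ a = 2 * 2 ^ (a - 1)" using a2 by (metis Suc_diff_1 less_le_trans pos2 power_Suc)
    then show "nD {2} = 2 ^ (a - 1)" using n2 ma by simp
  qed
  moreover have "Lsym = Legendre 2 (int p)" unfolding Lsym_def P2 by simp
  moreover have "[2 ^ hh = Legendre (int 2) (int p)] (mod int p)"
  proof -
    have "\<not> p dvd 2" using p_gt2 by (auto dest: dvd_imp_le)
    then show ?thesis using euler[of 2] by simp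
  qed
  ultimately show ?thesis using two_pow_psi[OF a2] cong_trans by simp
qed

lemma prod_psi: "(\<Prod>D\<in>Pow (prime_factors m). psi (nD D)) = Lsym"
proof (rule pm1_eq[OF _ Lsym_pm1 prod_psi_cong])
  have "(\<Prod>D\<in>Pow (prime_factors m). psi (nD D)) = (-1) ^ (\<Sum>D\<in>Pow (prime_factors m). EE (nD D))"
    unfolding psi_def by (simp add: power_sum)
  then show "(\<Prod>D\<in>Pow (prime_factors m). psi (nD D)) = 1 \<or> (\<Prod>D\<in>Pow (prime_factors m). psi (nD D)) = -1"
    by (simp add: minus_one_power_iff)
qed

end

context msetup
begin

lemma sign_sum: "int (\<Sum>k\<in>S2. p * k div m) = int hh * int (card S2) - (\<Sum>D\<in>Pow (prime_factors m). (-1) ^ card D * int (EE (nD D)))"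
proof -
  have a: "(\<Sum>k\<in>S2. int (p * k div m)) = (\<Sum>D\<in>Pow (prime_factors m). (-1) ^ card D * (\<Sum>k\<in>SS 2 {} (nD D). int (p * k div nD D)))"
  proof (rule IEm[where F="\<lambda>k n. int (p * k div n)"])
    fix q k n :: nat assume q: "q > 0"
    have "p * (q * k) div (q * n) = (q * (p * k)) div (q * n)" by (simp add: ac_simps)
    also have "\<dots> = p * k div n" using q by simp
    finally show "int (p * (q * k) div (q * n)) = int (p * k div n)" by simp
  qed simp
  have b: "(\<Sum>k\<in>S2. (1::int)) = (\<Sum>D\<in>Pow (prime_factors m). (-1) ^ card D * (\<Sum>k\<in>SS 2 {} (nD D). (1::int)))"
    by (rule IEm) simp_all
  have c: "(\<Sum>D\<in>Pow (prime_factors m). (-1) ^ card D * (\<Sum>k\<in>SS 2 {} (nD D). int (p * k div nD D)))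
     = (\<Sum>D\<in>Pow (prime_factors m). int hh * ((-1) ^ card D * int (card (SS 2 {} (nD D)))) - (-1) ^ card D * int (EE (nD D)))"
  proof (rule sum.cong)
    fix D assume "D \<in> Pow (prime_factors m)"
    then have D: "D \<subseteq> prime_factors m" by simp
    have "int (\<Sum>k\<in>SS 2 {} (nD D). p * k div nD D) = int hh * int (card (SS 2 {} (nD D))) - (\<Sum>i\<in>{1..hh}. int (i * nD D div p))"
      using base_sign[OF nD_pos[OF D] nD_ndvd[OF D]] unfolding hh_def .
    moreover have "int (EE (nD D)) = (\<Sum>i\<in>{1..hh}. int (i * nD D div p))" unfolding EE_def by simp
    ultimately have ee: "(\<Sum>k\<in>SS 2 {} (nD D). int (p * k div nD D)) = int hh * int (card (SS 2 {} (nD D))) - int (EE (nD D))"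
      by simp
    show "(-1) ^ card D * (\<Sum>k\<in>SS 2 {} (nD D). int (p * k div nD D))
      = int hh * ((-1) ^ card D * int (card (SS 2 {} (nD D)))) - (-1) ^ card D * int (EE (nD D))"
      unfolding ee by (simp add: algebra_simps)
  qed simp
  have "int (\<Sum>k\<in>S2. p * k div m) = (\<Sum>k\<in>S2. int (p * k div m))" by simp
  also have "\<dots> = int hh * (\<Sum>D\<in>Pow (prime_factors m). (-1) ^ card D * int (card (SS 2 {} (nD D))))
      - (\<Sum>D\<in>Pow (prime_factors m). (-1) ^ card D * int (EE (nD D)))"
    unfolding a c by (simp add: sum_subtractf sum_distrib_left)
  also have "(\<Sum>D\<in>Pow (prime_factors m). (-1) ^ card D * int (card (SS 2 {} (nD D)))) = int (card S2)"
    using b by simp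
  finally show ?thesis .
qed

lemma final_sign: "(-1::int) ^ (totient m div 2 * hh) * Lsym * (-1) ^ (\<Sum>k\<in>S2. p * k div m) = 1"
proof -
  define J where "J = (\<Sum>k\<in>S2. p * k div m)"
  define T where "T = (\<Sum>D\<in>Pow (prime_factors m). EE (nD D))"
  have "int J + int T - int (card S2 * hh) = (\<Sum>D\<in>Pow (prime_factors m). (1 - (-1) ^ card D) * int (EE (nD D)))"
    unfolding J_def sign_sum T_def by (simp add: algebra_simps sum_subtractf sum.distrib)
  moreover have "even (\<Sum>D\<in>Pow (prime_factors m). (1 - (-1) ^ card D) * int (EE (nD D)))"
  proof (rule dvd_sum)
    fix D
    show "even ((1 - (-1::int) ^ card D) * int (EE (nD D)))"
      by (cases "even (card D)") simp_all
  qed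
  ultimately have ev: "even (int J + int T - int (card S2 * hh))" by simp
  have pJT: "(-1::int) ^ J * (-1) ^ T = (-1) ^ (card S2 * hh)" by (rule pm1_parity[OF ev])
  have T: "(-1::int) ^ T = Lsym" unfolding T_def using prod_psi unfolding psi_def by (simp add: power_sum)
  have J2: "((-1::int) ^ J) * ((-1) ^ J) = 1" by (simp add: power_add[symmetric] mult_2[symmetric] power_mult)
  have L2: "Lsym * Lsym = 1" using Lsym_pm1 by auto
  have "(-1::int) ^ (totient m div 2 * hh) * Lsym * (-1) ^ J = ((-1) ^ J * (-1) ^ T) * Lsym * (-1) ^ J"
    using pJT card_S2 by simp
  also have "\<dots> = ((-1) ^ J * (-1) ^ J) * (Lsym * Lsym)" unfolding T by (simp add: ac_simps)
  also have "\<dots> = 1" using J2 L2 by simp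
  finally show ?thesis unfolding J_def .
qed

end

context msetup
begin

lemma q_T: assumes q: "q \<in> prime_factors m"
  shows "(int q - 1) * ((int q ^ (p - 1) - 1) div (int q - 1)) = U q"
proof -
  have "[int q = 1] (mod (int q - 1))" by (simp add: cong_iff_dvd_diff)
  then have "[int q ^ (p - 1) = 1 ^ (p - 1)] (mod (int q - 1))" by (rule cong_pow)
  then have "(int q - 1) dvd int q ^ (p - 1) - 1" by (simp add: cong_iff_dvd_diff)
  then show ?thesis unfolding U_def by simp
qed

lemma main_cong:
  "[(-1::int) ^ (totient m div 2 * ((p - 1) div 2))
          * (if card (prime_factors m) = 1
             then Legendre (int (the_elem (prime_factors m))) (int p) else 1)
          * (\<Prod>k\<in>{k. 0 < k \<and> 2 * k < m \<and> coprime k m}. int ((p - 1) choose (p * k div m)))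
        = 1 + int (totient m div 2)
              * (\<Sum>q\<in>prime_factors m.
                   (int (multiplicity q m) * int q - int (multiplicity q m) + 1)
                   * ((int q ^ (p - 1) - 1) div (int q - 1)))] (mod (int p ^ 2))"
proof -
  define j where "j k = p * k div m" for k
  define J where "J = (\<Sum>k\<in>S2. j k)"
  define SH where "SH = (\<Sum>k\<in>S2. H (j k))"
  define cq where "cq q = int (multiplicity q m) * int q - int (multiplicity q m) + 1" for q
  have fin: "finite S2" by (rule SS_finite) simp
  have Sset: "{k. 0 < k \<and> 2 * k < m \<and> coprime k m} = S2" using SS_P by simp
  have jle: "\<And>k. k \<in> S2 \<Longrightarrow> j k \<le> p - 1"
  proof -
    fix k assume "k \<in> S2"
    then have "2 * k < m" by (simp add: SS_def)
    then have "p * k < p * m" using p_gt2 by simp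
    then have "p * k div m < p" using div_less_iff_less_mult[of m "p * k" p] m2 by (simp add: mult.commute)
    then show "j k \<le> p - 1" unfolding j_def by simp
  qed
  have P1: "[(\<Prod>k\<in>S2. int ((p - 1) choose j k)) = (\<Prod>k\<in>S2. (-1) ^ j k * (1 + int p * (- H (j k))))] (mod (int p ^ 2))"
  proof (rule cong_prod)
    fix k assume "k \<in> S2"
    then show "[int ((p - 1) choose j k) = (-1) ^ j k * (1 + int p * (- H (j k)))] (mod (int p ^ 2))"
      using binom_cong[OF jle] by simp
  qed
  have P2: "(\<Prod>k\<in>S2. (-1) ^ j k * (1 + int p * (- H (j k)))) = (-1) ^ J * (\<Prod>k\<in>S2. 1 + int p * (- H (j k)))"
    unfolding J_def by (simp add: prod.distrib power_sum)
  have P3: "[(\<Prod>k\<in>S2. 1 + int p * (- H (j k))) = 1 - int p * SH] (mod (int p ^ 2))"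
    using prod_one_plus[OF fin, of "\<lambda>k. - H (j k)"] unfolding SH_def by (simp add: sum_negf)
  define sg where "sg = (-1::int) ^ (totient m div 2 * hh) * Lsym"
  have sgJ: "sg * (-1) ^ J = 1" unfolding sg_def J_def j_def using final_sign by simp
  have LHS: "[sg * (\<Prod>k\<in>S2. int ((p - 1) choose j k)) = 1 - int p * SH] (mod (int p ^ 2))"
  proof -
    have "[sg * (\<Prod>k\<in>S2. int ((p - 1) choose j k)) = sg * ((-1) ^ J * (1 - int p * SH))] (mod (int p ^ 2))"
      using cong_scalar_left[OF cong_trans[OF P1[unfolded P2] cong_scalar_left[OF P3]]] .
    also have "sg * ((-1) ^ J * (1 - int p * SH)) = (sg * (-1) ^ J) * (1 - int p * SH)" by (simp add: ac_simps)
    finally show ?thesis using sgJ by simp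
  qed
  have mag: "[2 * int p * SH = - (\<Sum>q\<in>prime_factors m. cq q * Xq q * U q)] (mod (int p ^ 2))"
    using magnitude unfolding SH_def j_def cq_def .
  have ev: "even (totient m)" using totient_even m2 by simp
  have RHS2: "2 * (1 + int (totient m div 2) * (\<Sum>q\<in>prime_factors m. cq q * ((int q ^ (p - 1) - 1) div (int q - 1))))
      = 2 + (\<Sum>q\<in>prime_factors m. cq q * Xq q * U q)"
  proof -
    have t1: "2 * (totient m div 2) = totient m" using ev by (rule even_two_times_div_two)
    have t2: "2 * int (totient m div 2) = int (totient m)" using arg_cong[OF t1, of int] by simp
    have "2 * (1 + int (totient m div 2) * (\<Sum>q\<in>prime_factors m. cq q * ((int q ^ (p - 1) - 1) div (int q - 1))))
       = 2 + (\<Sum>q\<in>prime_factors m. cq q * (int (totient m) * ((int q ^ (p - 1) - 1) div (int q - 1))))"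
      by (simp add: algebra_simps sum_distrib_left t2[symmetric])
    also have "\<dots> = 2 + (\<Sum>q\<in>prime_factors m. cq q * Xq q * U q)"
    proof -
      have "\<And>q. q \<in> prime_factors m \<Longrightarrow> int (totient m) * ((int q ^ (p - 1) - 1) div (int q - 1)) = Xq q * U q"
      proof -
        fix q assume q: "q \<in> prime_factors m"
        have "int (totient m) * ((int q ^ (p - 1) - 1) div (int q - 1)) = Xq q * ((int q - 1) * ((int q ^ (p - 1) - 1) div (int q - 1)))"
          unfolding phi_Xq[OF q] by (simp add: ac_simps)
        then show "int (totient m) * ((int q ^ (p - 1) - 1) div (int q - 1)) = Xq q * U q"
          unfolding q_T[OF q] .
      qed
      then show ?thesis by (simp add: mult.assoc)
    qed
    finally show ?thesis .
  qed
  have "[2 * (1 - int p * SH) = 2 + (\<Sum>q\<in>prime_factors m. cq q * Xq q * U q)] (mod (int p ^ 2))"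
  proof -
    have "[2 - 2 * int p * SH = 2 - (- (\<Sum>q\<in>prime_factors m. cq q * Xq q * U q))] (mod (int p ^ 2))"
      by (rule cong_diff[OF cong_refl mag])
    then show ?thesis by (simp add: algebra_simps)
  qed
  then have C2: "[(1 - int p * SH) * 2 = (1 + int (totient m div 2) * (\<Sum>q\<in>prime_factors m. cq q * ((int q ^ (p - 1) - 1) div (int q - 1)))) * 2] (mod (int p ^ 2))"
    using RHS2 by (simp add: ac_simps)
  have cop: "coprime (2::int) (int p ^ 2)"
  proof (rule coprime_p2)
    show "\<not> int p dvd 2"
    proof
      assume "int p dvd 2" then have "int p dvd int 2" by simp
      then have "p dvd 2" by (simp only: of_nat_dvd_iff)
      then show False using p_gt2 by (auto dest: dvd_imp_le)
    qed
  qed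
  have "[1 - int p * SH = 1 + int (totient m div 2) * (\<Sum>q\<in>prime_factors m. cq q * ((int q ^ (p - 1) - 1) div (int q - 1)))] (mod (int p ^ 2))"
    using C2 cong_mult_rcancel[OF cop] by blast
  then have "[sg * (\<Prod>k\<in>S2. int ((p - 1) choose j k)) = 1 + int (totient m div 2) * (\<Sum>q\<in>prime_factors m. cq q * ((int q ^ (p - 1) - 1) div (int q - 1)))] (mod (int p ^ 2))"
    using LHS cong_trans by blast
  then show ?thesis unfolding sg_def Lsym_def Sset j_def cq_def hh_def .
qed

end

theorem theorem1p2:
  fixes m p :: nat
  assumes "m > 2" and "prime p" and "odd p" and "\<not> p dvd m"
  shows "[(-1::int) ^ (totient m div 2 * ((p - 1) div 2))
          * (if card (prime_factors m) = 1
             then Legendre (int (the_elem (prime_factors m))) (int p) else 1)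
          * (\<Prod>k\<in>{k. 0 < k \<and> 2 * k < m \<and> coprime k m}. int ((p - 1) choose (p * k div m)))
        = 1 + int (totient m div 2)
              * (\<Sum>q\<in>prime_factors m.
                   (int (multiplicity q m) * int q - int (multiplicity q m) + 1)
                   * ((int q ^ (p - 1) - 1) div (int q - 1)))] (mod (int p ^ 2))"
proof -
  interpret msetup p m
    by unfold_locales (use assms in auto)
  show ?thesis by (rule main_cong)
qed

end
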